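(* Let $P$ be a program and $G$ a goal. Suppose every infinite SLD derivation of $G$ in $P$ (under arbitrary selection of atoms) is pruned by $EVR_L$. Then there is a finite bound $l$ such that every resolvent $R$ occurring in any SLD derivation of $G$ in $P$ satisfies $\#R\le l$.
   Context: Goals are finite lists of atoms; $\#R$ is the number of atoms of $R$; $=_L$ denotes equality of goals as lists. A clause is $h\leftarrow B$; a program is a finite set of clauses. If $G=a_1,\dots,a_k$, $c=(h\leftarrow B)$, $\xi$ a renaming and $\theta$ an idempotent relevant mgu of $h\xi$ and some $a_i$, then $(a_1,\dots,a_{i-1},B\xi,a_{i+1},\dots,a_k)\theta$ is a resolvent. An SLD derivation of $G_0$ in $P$ is a finite or infinite sequence $G_0\xrightarrow{c_0\xi_0,\theta_0}G_1\xrightarrow{c_1\xi_1,\theta_1}\cdots$ of such steps with $c_j\in P$ and $var(c_j\xi_j)\cap(var(G_0)\cup var(c_0\xi_0)\cup\dots\cup var(c_{j-1}\xi_{j-1}))=\emptyset$; the selected atom at each step is arbitrary. $EVR_L$ (Equality Variant of Resultant as Lists) check: a derivation $G_0\xrightarrow{\theta_0}G_1\xrightarrow{\theta_1}\cdots$ is pruned by $EVR_L$ if there exist indices $0\le i<j$ and a renaming $\tau$ with $G_0\theta_0\cdots\theta_{j-1}=G_0\theta_0\cdots\theta_{i-1}\tau$ and $G_j=_L G_i\tau$. *)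

theory Defs
  imports Main
begin

datatype ('f, 'v) trm = Var 'v | Fn 'f "('f, 'v) trm list"

datatype ('p, 'f, 'v) atom = Atom 'p "('f, 'v) trm list"

type_synonym ('f, 'v) subst = "'v \<Rightarrow> ('f, 'v) trm"

type_synonym ('p, 'f, 'v) goal = "('p, 'f, 'v) atom list"

text \<open>A clause h <- B is a pair (head, body).\<close>
type_synonym ('p, 'f, 'v) clause = "('p, 'f, 'v) atom \<times> ('p, 'f, 'v) atom list"

fun subst_trm :: "('f, 'v) subst \<Rightarrow> ('f, 'v) trm \<Rightarrow> ('f, 'v) trm" where
  "subst_trm \<sigma> (Var x) = \<sigma> x"
| "subst_trm \<sigma> (Fn f ts) = Fn f (map (subst_trm \<sigma>) ts)"

fun vars_trm :: "('f, 'v) trm \<Rightarrow> 'v set" where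
  "vars_trm (Var x) = {x}"
| "vars_trm (Fn f ts) = \<Union> (set (map vars_trm ts))"

fun subst_atom :: "('f, 'v) subst \<Rightarrow> ('p, 'f, 'v) atom \<Rightarrow> ('p, 'f, 'v) atom" where
  "subst_atom \<sigma> (Atom p ts) = Atom p (map (subst_trm \<sigma>) ts)"

fun vars_atom :: "('p, 'f, 'v) atom \<Rightarrow> 'v set" where
  "vars_atom (Atom p ts) = \<Union> (set (map vars_trm ts))"

definition subst_goal :: "('f, 'v) subst \<Rightarrow> ('p, 'f, 'v) goal \<Rightarrow> ('p, 'f, 'v) goal" where
  "subst_goal \<sigma> G = map (subst_atom \<sigma>) G"

definition vars_goal :: "('p, 'f, 'v) goal \<Rightarrow> 'v set" where
  "vars_goal G = \<Union> (set (map vars_atom G))"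

definition subst_clause :: "('f, 'v) subst \<Rightarrow> ('p, 'f, 'v) clause \<Rightarrow> ('p, 'f, 'v) clause" where
  "subst_clause \<sigma> c = (subst_atom \<sigma> (fst c), subst_goal \<sigma> (snd c))"

definition vars_clause :: "('p, 'f, 'v) clause \<Rightarrow> 'v set" where
  "vars_clause c = vars_atom (fst c) \<union> vars_goal (snd c)"

text \<open>Composition: applying (comp_subst s t) means first s, then t.\<close>
definition comp_subst :: "('f, 'v) subst \<Rightarrow> ('f, 'v) subst \<Rightarrow> ('f, 'v) subst" where
  "comp_subst \<sigma> \<tau> = (\<lambda>x. subst_trm \<tau> (\<sigma> x))"

definition dom_subst :: "('f, 'v) subst \<Rightarrow> 'v set" where
  "dom_subst \<sigma> = {x. \<sigma> x \<noteq> Var x}"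

definition vars_subst :: "('f, 'v) subst \<Rightarrow> 'v set" where
  "vars_subst \<sigma> = dom_subst \<sigma> \<union> (\<Union>x\<in>dom_subst \<sigma>. vars_trm (\<sigma> x))"

definition renaming :: "('f, 'v) subst \<Rightarrow> bool" where
  "renaming \<xi> \<longleftrightarrow> (\<exists>\<pi>. bij \<pi> \<and> \<xi> = (\<lambda>x. Var (\<pi> x)))"

definition unifier :: "('f, 'v) subst \<Rightarrow> ('p, 'f, 'v) atom \<Rightarrow> ('p, 'f, 'v) atom \<Rightarrow> bool" where
  "unifier \<theta> a b \<longleftrightarrow> subst_atom \<theta> a = subst_atom \<theta> b"

definition mgu :: "('f, 'v) subst \<Rightarrow> ('p, 'f, 'v) atom \<Rightarrow> ('p, 'f, 'v) atom \<Rightarrow> bool" where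
  "mgu \<theta> a b \<longleftrightarrow> unifier \<theta> a b \<and>
     (\<forall>\<sigma>. unifier \<sigma> a b \<longrightarrow> (\<exists>\<delta>. \<sigma> = comp_subst \<theta> \<delta>))"

definition idempotent :: "('f, 'v) subst \<Rightarrow> bool" where
  "idempotent \<theta> \<longleftrightarrow> comp_subst \<theta> \<theta> = \<theta>"

definition relevant :: "('f, 'v) subst \<Rightarrow> ('p, 'f, 'v) atom \<Rightarrow> ('p, 'f, 'v) atom \<Rightarrow> bool" where
  "relevant \<theta> a b \<longleftrightarrow> vars_subst \<theta> \<subseteq> vars_atom a \<union> vars_atom b"

definition sld_step ::
  "('p, 'f, 'v) clause set \<Rightarrow> ('p, 'f, 'v) goal \<Rightarrow> ('p, 'f, 'v) clause \<Rightarrow> ('f, 'v) subst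
   \<Rightarrow> ('f, 'v) subst \<Rightarrow> ('p, 'f, 'v) goal \<Rightarrow> bool" where
  "sld_step P G c \<xi> \<theta> G' \<longleftrightarrow> c \<in> P \<and> renaming \<xi> \<and>
     (\<exists>i < length G.
        idempotent \<theta> \<and> mgu \<theta> (subst_atom \<xi> (fst c)) (G ! i) \<and>
        relevant \<theta> (subst_atom \<xi> (fst c)) (G ! i) \<and>
        G' = subst_goal \<theta> (take i G @ subst_goal \<xi> (snd c) @ drop (Suc i) G))"

text \<open>The first n steps of an SLD derivation G 0 -> G 1 -> ... -> G n of G0 in P
  (a finite derivation of length n, or the length-n prefix of a longer one),
  including the standardization-apart condition.\<close>
definition sld_derivation_upto ::
  "('p, 'f, 'v) clause set \<Rightarrow> ('p, 'f, 'v) goal \<Rightarrow> nat \<Rightarrow> (nat \<Rightarrow> ('p, 'f, 'v) goal)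
   \<Rightarrow> (nat \<Rightarrow> ('p, 'f, 'v) clause) \<Rightarrow> (nat \<Rightarrow> ('f, 'v) subst) \<Rightarrow> (nat \<Rightarrow> ('f, 'v) subst) \<Rightarrow> bool" where
  "sld_derivation_upto P G0 n G c \<xi> \<theta> \<longleftrightarrow> G 0 = G0 \<and>
     (\<forall>j < n. sld_step P (G j) (c j) (\<xi> j) (\<theta> j) (G (Suc j)) \<and>
        vars_clause (subst_clause (\<xi> j) (c j)) \<inter>
          (vars_goal G0 \<union> (\<Union>k<j. vars_clause (subst_clause (\<xi> k) (c k)))) = {})"

definition sld_derivation_inf ::
  "('p, 'f, 'v) clause set \<Rightarrow> ('p, 'f, 'v) goal \<Rightarrow> (nat \<Rightarrow> ('p, 'f, 'v) goal)
   \<Rightarrow> (nat \<Rightarrow> ('p, 'f, 'v) clause) \<Rightarrow> (nat \<Rightarrow> ('f, 'v) subst) \<Rightarrow> (nat \<Rightarrow> ('f, 'v) subst) \<Rightarrow> bool" where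
  "sld_derivation_inf P G0 G c \<xi> \<theta> \<longleftrightarrow> (\<forall>n. sld_derivation_upto P G0 n G c \<xi> \<theta>)"

fun comp_upto :: "(nat \<Rightarrow> ('f, 'v) subst) \<Rightarrow> nat \<Rightarrow> ('f, 'v) subst" where
  "comp_upto \<theta> 0 = Var"
| "comp_upto \<theta> (Suc k) = comp_subst (comp_upto \<theta> k) (\<theta> k)"

definition pruned_EVR_L ::
  "('p, 'f, 'v) goal \<Rightarrow> (nat \<Rightarrow> ('p, 'f, 'v) goal) \<Rightarrow> (nat \<Rightarrow> ('f, 'v) subst) \<Rightarrow> bool" where
  "pruned_EVR_L G0 G \<theta> \<longleftrightarrow> (\<exists>i j \<tau>. i < j \<and> renaming \<tau> \<and>
     subst_goal (comp_upto \<theta> j) G0 = subst_goal \<tau> (subst_goal (comp_upto \<theta> i) G0) \<and>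
     G j = subst_goal \<tau> (G i))"

end

theory Submission imports Defs begin

lemma subst_trm_comp: "subst_trm (comp_subst s t) u = subst_trm t (subst_trm s u)"
  by (induction u) (auto simp: comp_subst_def)

lemma subst_trm_Var[simp]: "subst_trm Var u = u"
  by (induction u) (auto simp: map_idI)

lemma subst_trm_cong: "(\<And>x. x \<in> vars_trm u \<Longrightarrow> s x = t x) \<Longrightarrow> subst_trm s u = subst_trm t u"
  by (induction u) auto

lemma vars_subst_trm: "vars_trm (subst_trm s u) = (\<Union>x\<in>vars_trm u. vars_trm (s x))"
  by (induction u) auto

lemma subst_trm_id_vars: "subst_trm s u = u \<Longrightarrow> x \<in> vars_trm u \<Longrightarrow> s x = Var x"
proof (induction u)
  case (Var y) then show ?case by simp
next
  case (Fn f ts)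
  then obtain t where t: "t \<in> set ts" "x \<in> vars_trm t" by auto
  from Fn.prems(1) have "map (subst_trm s) ts = ts" by simp
  then have "subst_trm s t = t" using t(1) by (metis map_eq_conv map_ident)
  then show ?case using Fn.IH t by blast
qed

lemma finite_vars_trm[simp]: "finite (vars_trm u)"
  by (induction u) auto


lemma subst_atom_comp: "subst_atom (comp_subst s t) a = subst_atom t (subst_atom s a)"
  by (cases a) (simp add: subst_trm_comp)
lemma subst_atom_Var[simp]: "subst_atom Var a = a"
  by (cases a) (simp add: map_idI)
lemma subst_atom_cong: "(\<And>x. x \<in> vars_atom a \<Longrightarrow> s x = t x) \<Longrightarrow> subst_atom s a = subst_atom t a"
  by (cases a) (auto intro!: subst_trm_cong)
lemma vars_subst_atom: "vars_atom (subst_atom s a) = (\<Union>x\<in>vars_atom a. vars_trm (s x))"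
  by (cases a) (auto simp: vars_subst_trm)
lemma subst_atom_id_vars: "subst_atom s a = a \<Longrightarrow> x \<in> vars_atom a \<Longrightarrow> s x = Var x"
  apply (cases a) apply auto
  by (metis map_eq_conv map_ident subst_trm_id_vars)
lemma finite_vars_atom[simp]: "finite (vars_atom a)"
  by (cases a) auto

lemma subst_goal_comp: "subst_goal (comp_subst s t) a = subst_goal t (subst_goal s a)"
  by (simp add: subst_goal_def subst_atom_comp)
lemma subst_goal_Var[simp]: "subst_goal Var a = a"
  by (simp add: subst_goal_def map_idI)
lemma subst_goal_cong: "(\<And>x. x \<in> vars_goal a \<Longrightarrow> s x = t x) \<Longrightarrow> subst_goal s a = subst_goal t a"
  by (auto simp: subst_goal_def vars_goal_def intro!: subst_atom_cong)
lemma vars_subst_goal: "vars_goal (subst_goal s a) = (\<Union>x\<in>vars_goal a. vars_trm (s x))"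
  by (auto simp: subst_goal_def vars_goal_def vars_subst_atom)
lemma subst_goal_id_vars: "subst_goal s a = a \<Longrightarrow> x \<in> vars_goal a \<Longrightarrow> s x = Var x"
  unfolding subst_goal_def vars_goal_def
  by (auto simp: map_eq_conv) (metis map_eq_conv map_ident subst_atom_id_vars)
lemma finite_vars_goal[simp]: "finite (vars_goal a)"
  by (auto simp: vars_goal_def)
lemma subst_goal_append[simp]: "subst_goal s (a @ b) = subst_goal s a @ subst_goal s b"
  by (simp add: subst_goal_def)
lemma vars_goal_append[simp]: "vars_goal (a @ b) = vars_goal a \<union> vars_goal b"
  by (simp add: vars_goal_def)
lemma length_subst_goal[simp]: "length (subst_goal s a) = length a"
  by (simp add: subst_goal_def)
lemma nth_subst_goal[simp]: "i < length a \<Longrightarrow> subst_goal s a ! i = subst_atom s (a ! i)"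
  by (simp add: subst_goal_def)
lemma take_subst_goal: "take i (subst_goal s a) = subst_goal s (take i a)"
  by (simp add: subst_goal_def take_map)
lemma drop_subst_goal: "drop i (subst_goal s a) = subst_goal s (drop i a)"
  by (simp add: subst_goal_def drop_map)
lemma vars_atom_nth: "i < length a \<Longrightarrow> vars_atom (a ! i) \<subseteq> vars_goal a"
  by (auto simp: vars_goal_def) (metis nth_mem)

lemma comp_subst_assoc: "comp_subst (comp_subst a b) c = comp_subst a (comp_subst b c)"
  by (rule ext) (simp add: comp_subst_def subst_trm_comp[unfolded comp_subst_def])
lemma comp_subst_Var_left[simp]: "comp_subst Var s = s"
  by (rule ext) (simp add: comp_subst_def)
lemma comp_subst_Var_right[simp]: "comp_subst s Var = s"
  by (rule ext) (simp add: comp_subst_def)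

lemma vars_ren_trm: "vars_trm (subst_trm (\<lambda>x. Var (\<pi> x)) u) = \<pi> ` vars_trm u"
  by (auto simp: vars_subst_trm)
lemma vars_ren_atom: "vars_atom (subst_atom (\<lambda>x. Var (\<pi> x)) u) = \<pi> ` vars_atom u"
  by (auto simp: vars_subst_atom)
lemma vars_ren_goal: "vars_goal (subst_goal (\<lambda>x. Var (\<pi> x)) u) = \<pi> ` vars_goal u"
  by (auto simp: vars_subst_goal)

lemma renaming_inv:
  assumes "renaming r" shows "\<exists>r'. renaming r' \<and> comp_subst r r' = Var \<and> comp_subst r' r = Var"
proof -
  obtain \<pi> where p: "bij \<pi>" "r = (\<lambda>x. Var (\<pi> x))" using assms renaming_def by blast
  let ?r' = "\<lambda>x. Var (inv \<pi> x)"
  have "renaming ?r'" unfolding renaming_def using p(1) bij_imp_bij_inv by blast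
  moreover have "comp_subst r ?r' = Var" using p by (auto simp: comp_subst_def bij_def)
  moreover have "comp_subst ?r' r = Var" using p by (auto simp: comp_subst_def bij_def surj_f_inv_f)
  ultimately show ?thesis by blast
qed

lemma renaming_comp: "renaming r \<Longrightarrow> renaming s \<Longrightarrow> renaming (comp_subst r s)"
  unfolding renaming_def comp_subst_def
  apply clarsimp
  subgoal for \<pi> \<sigma> by (rule exI[of _ "\<sigma> \<circ> \<pi>"]) (auto simp: bij_comp)
  done

lemma renaming_Var: "renaming Var"
  unfolding renaming_def by (rule exI[of _ id]) auto


lemma extend_bij:
  fixes f :: "'a \<Rightarrow> 'a"
  assumes "finite A" "inj_on f A"
  shows "\<exists>\<pi>. bij \<pi> \<and> (\<forall>x\<in>A. \<pi> x = f x)"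
proof -
  let ?B = "f ` A"
  have fB: "finite ?B" using assms by simp
  have cB: "card ?B = card A" using assms card_image by blast
  have "card (?B - A) = card (A - ?B)"
  proof -
    have "card (?B - A) = card ?B - card (?B \<inter> A)" using fB
      by (simp add: card_Diff_subset_Int Int_commute)
    moreover have "card (A - ?B) = card A - card (A \<inter> ?B)" using assms(1)
      by (simp add: card_Diff_subset_Int Int_commute)
    ultimately show ?thesis using cB by (simp add: Int_commute)
  qed
  then obtain h where h: "bij_betw h (?B - A) (A - ?B)"
    using finite_same_card_bij[of "?B - A" "A - ?B"] assms(1) fB by auto
  define \<pi> where "\<pi> x = (if x \<in> A then f x else if x \<in> ?B then h x else x)" for x
  have hB: "x \<in> ?B - A \<Longrightarrow> h x \<in> A - ?B" for x using bij_betw_apply[OF h] by simp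
  have hinj: "inj_on h (?B - A)" using bij_betw_imp_inj_on[OF h] .
  have pc: "(z \<in> A \<and> \<pi> z = f z) \<or> (z \<notin> A \<and> z \<in> ?B \<and> \<pi> z = h z) \<or> (z \<notin> A \<and> z \<notin> ?B \<and> \<pi> z = z)" for z
    unfolding \<pi>_def by simp
  have pv: "(\<pi> z \<in> ?B \<longleftrightarrow> z \<in> A) \<and> (\<pi> z \<in> A - ?B \<longleftrightarrow> z \<in> ?B - A)" for z
  proof -
    consider "z \<in> A" "\<pi> z = f z" | "z \<notin> A" "z \<in> ?B" "\<pi> z = h z" | "z \<notin> A" "z \<notin> ?B" "\<pi> z = z"
      using pc[of z] by blast
    then show ?thesis
    proof cases
      case 1 then show ?thesis by simp
    next
      case 2 then have "h z \<in> A - ?B" using hB by blast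
      then show ?thesis using 2 by simp
    next
      case 3 then show ?thesis by simp
    qed
  qed
  have inj: "inj \<pi>"
  proof (rule injI)
    fix x y assume e: "\<pi> x = \<pi> y"
    have fA: "z \<in> A \<Longrightarrow> f z \<in> ?B" for z by blast
    from pc[of x] pc[of y] show "x = y"
    proof (elim disjE conjE)
    qed (use e hB fA inj_onD[OF hinj] inj_onD[OF assms(2)] in \<open>metis DiffD1 DiffD2 DiffI\<close>)+
  qed
  have surj: "surj \<pi>"
  proof -
    have "y \<in> range \<pi>" for y
    proof (cases "y \<in> ?B")
      case True
      then obtain x where x: "x \<in> A" "y = f x" by (rule imageE)
      then have "\<pi> x = y" using pc[of x] by blast
      then show ?thesis by (metis rangeI)
    next
      case False
      show ?thesis
      proof (cases "y \<in> A")
        case True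
        with False have "y \<in> A - ?B" by (rule_tac DiffI)
        then have "y \<in> h ` (?B - A)" using h by (simp add: bij_betw_def)
        then obtain x where x: "x \<in> ?B - A" "y = h x" by (rule imageE)
        then have "\<pi> x = y" using pc[of x] by blast
        then show ?thesis by (metis rangeI)
      next
        case False2: False
        then have "\<pi> y = y" using False pc[of y] by blast
        then show ?thesis by (metis rangeI)
      qed
    qed
    then show ?thesis by blast
  qed
  have "\<forall>x\<in>A. \<pi> x = f x" unfolding \<pi>_def by simp
  then show ?thesis using inj surj by (auto simp: bij_def)
qed

lemma fresh_bij:
  fixes U V :: "'a set"
  assumes "infinite (UNIV :: 'a set)" "finite U" "finite V"
  shows "\<exists>\<pi>. bij \<pi> \<and> \<pi> ` V \<inter> U = {}"
proof -
  have "infinite (UNIV - U)" using assms(1,2) by (simp add: Diff_infinite_finite)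
  then obtain W where W: "finite W" "card W = card V" "W \<subseteq> UNIV - U"
    using infinite_arbitrarily_large[of "UNIV - U" "card V"] by blast
  obtain g where g: "bij_betw g V W" using finite_same_card_bij[OF assms(3) W(1) W(2)[symmetric]] by blast
  then have "inj_on g V" by (rule bij_betw_imp_inj_on)
  then obtain \<pi> where p: "bij \<pi>" "\<forall>x\<in>V. \<pi> x = g x" using extend_bij[OF assms(3)] by blast
  have "\<pi> ` V = g ` V" using p(2) by (simp cong: image_cong)
  also have "\<dots> = W" using g by (simp add: bij_betw_def)
  finally show ?thesis using p(1) W(3) by blast
qed

fun vof :: "('f, 'v) trm \<Rightarrow> 'v" where
  "vof (Var x) = x" | "vof (Fn f ts) = undefined"

lemma mutual_variant:
  assumes "subst_goal \<delta> X = Y" "subst_goal \<delta>' Y = X"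
  shows "\<exists>\<rho>. renaming \<rho> \<and> subst_goal \<rho> X = Y"
proof -
  have "subst_goal (comp_subst \<delta> \<delta>') X = X" unfolding subst_goal_comp assms(1) assms(2) ..
  then have id: "x \<in> vars_goal X \<Longrightarrow> subst_trm \<delta>' (\<delta> x) = Var x" for x
    using subst_goal_id_vars[of "comp_subst \<delta> \<delta>'" X x] unfolding comp_subst_def by simp
  have isv: "x \<in> vars_goal X \<Longrightarrow> \<delta> x = Var (vof (\<delta> x))" for x
    using id[of x] by (cases "\<delta> x") auto
  have "inj_on (\<lambda>x. vof (\<delta> x)) (vars_goal X)"
  proof (rule inj_onI)
    fix x y assume hx: "x \<in> vars_goal X" and hy: "y \<in> vars_goal X" and eq: "vof (\<delta> x) = vof (\<delta> y)"
    have "\<delta> x = Var (vof (\<delta> x))" by (rule isv[OF hx])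
    also have "\<dots> = Var (vof (\<delta> y))" by (simp only: eq)
    also have "\<dots> = \<delta> y" by (rule isv[OF hy, symmetric])
    finally have "\<delta> x = \<delta> y" .
    have "Var x = subst_trm \<delta>' (\<delta> x)" by (rule id[OF hx, symmetric])
    also have "\<dots> = subst_trm \<delta>' (\<delta> y)" by (simp only: \<open>\<delta> x = \<delta> y\<close>)
    also have "\<dots> = Var y" by (rule id[OF hy])
    finally show "x = y" by simp
  qed
  then obtain \<pi> where p: "bij \<pi>" "\<forall>x\<in>vars_goal X. \<pi> x = vof (\<delta> x)"
    using extend_bij[OF finite_vars_goal] by blast
  have "subst_goal (\<lambda>x. Var (\<pi> x)) X = subst_goal \<delta> X"
  proof (rule subst_goal_cong)
    fix x assume hx: "x \<in> vars_goal X"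
    have "Var (\<pi> x) = Var (vof (\<delta> x))" using p(2) hx by simp
    then show "Var (\<pi> x) = \<delta> x" using isv[OF hx, symmetric] by (rule trans)
  qed
  then show ?thesis using p(1) assms(1) unfolding renaming_def by blast
qed

lemma mgu_variant:
  assumes "renaming r" "subst_atom r a1 = b1" "subst_atom r a2 = b2" "mgu \<theta> a1 a2" "mgu \<theta>' b1 b2"
  shows "\<exists>\<rho>. renaming \<rho> \<and> subst_goal \<rho> (subst_goal \<theta> X) = subst_goal \<theta>' (subst_goal r X)"
proof -
  obtain r' where r': "comp_subst r r' = Var" "comp_subst r' r = Var" using renaming_inv[OF assms(1)] by blast
  have "unifier (comp_subst r \<theta>') a1 a2"
    using assms(2,3,5) unfolding mgu_def unifier_def by (simp add: subst_atom_comp)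
  then obtain d1 where d1: "comp_subst r \<theta>' = comp_subst \<theta> d1" using assms(4) unfolding mgu_def by blast
  have ia1: "subst_atom r' b1 = a1" using assms(2) r'(1) subst_atom_comp[of r r' a1] by simp
  have ia2: "subst_atom r' b2 = a2" using assms(3) r'(1) subst_atom_comp[of r r' a2] by simp
  have "unifier (comp_subst r' \<theta>) b1 b2"
    using assms(4) ia1 ia2 unfolding mgu_def unifier_def by (simp add: subst_atom_comp)
  then obtain d2 where d2: "comp_subst r' \<theta> = comp_subst \<theta>' d2" using assms(5) unfolding mgu_def by blast
  have e1: "subst_goal d1 (subst_goal \<theta> X) = subst_goal \<theta>' (subst_goal r X)"
    by (simp only: subst_goal_comp[symmetric] d1)
  have "subst_goal \<theta> X = subst_goal \<theta> (subst_goal (comp_subst r r') X)" using r'(1) by simp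
  also have "\<dots> = subst_goal (comp_subst r' \<theta>) (subst_goal r X)" by (simp only: subst_goal_comp)
  also have "\<dots> = subst_goal d2 (subst_goal \<theta>' (subst_goal r X))" by (simp only: d2 subst_goal_comp)
  finally have e2: "subst_goal d2 (subst_goal \<theta>' (subst_goal r X)) = subst_goal \<theta> X" by simp
  show ?thesis using mutual_variant[OF e1 e2] .
qed

definition pre :: "('p, 'f, 'v) goal \<Rightarrow> ('p, 'f, 'v) goal \<Rightarrow> nat \<Rightarrow> ('f, 'v) subst \<Rightarrow> ('p, 'f, 'v) goal \<Rightarrow> ('p, 'f, 'v) goal" where
  "pre A G i \<xi> B = A @ take i G @ subst_goal \<xi> B @ drop (Suc i) G"

lemma subst_pre: "subst_goal r (pre A G i \<xi> B) = pre (subst_goal r A) (subst_goal r G) i (comp_subst \<xi> r) B"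
  by (simp add: pre_def take_subst_goal drop_subst_goal subst_goal_comp)

lemma match_ren:
  fixes \<rho> \<xi> \<xi>' :: "('f, 'v) subst"
  assumes "renaming \<rho>" "renaming \<xi>" "renaming \<xi>'"
    and "(vars_atom (subst_atom \<xi> h) \<union> vars_goal (subst_goal \<xi> B)) \<inter> vars_goal X = {}"
    and "(vars_atom (subst_atom \<xi>' h) \<union> vars_goal (subst_goal \<xi>' B)) \<inter> vars_goal (subst_goal \<rho> X) = {}"
  shows "\<exists>r. renaming r \<and> subst_goal r X = subst_goal \<rho> X \<and>
           subst_atom (comp_subst \<xi> r) h = subst_atom \<xi>' h \<and> subst_goal (comp_subst \<xi> r) B = subst_goal \<xi>' B"
proof -
  obtain \<pi> where p: "bij \<pi>" "\<rho> = (\<lambda>x. Var (\<pi> x))" using assms(1) renaming_def by blast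
  obtain \<alpha> where a: "bij \<alpha>" "\<xi> = (\<lambda>x. Var (\<alpha> x))" using assms(2) renaming_def by blast
  obtain \<beta> where b: "bij \<beta>" "\<xi>' = (\<lambda>x. Var (\<beta> x))" using assms(3) renaming_def by blast
  define S where "S = vars_goal X"
  define V where "V = vars_atom h \<union> vars_goal B"
  have D: "\<alpha> ` V \<inter> S = {}" using assms(4) unfolding a(2) S_def V_def vars_ren_atom vars_ren_goal by blast
  have D': "\<beta> ` V \<inter> \<pi> ` S = {}" using assms(5) unfolding b(2) p(2) S_def V_def vars_ren_atom vars_ren_goal by blast
  have ia: "inv \<alpha> (\<alpha> v) = v" for v using a(1) by (simp add: bij_def)
  define f where "f x = (if x \<in> S then \<pi> x else \<beta> (inv \<alpha> x))" for x
  have "inj_on f (S \<union> \<alpha> ` V)"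
  proof (rule inj_onI)
    fix x y assume hx: "x \<in> S \<union> \<alpha> ` V" and hy: "y \<in> S \<union> \<alpha> ` V" and e: "f x = f y"
    have ip: "inj \<pi>" using p(1) bij_def by blast
    have ib: "inj \<beta>" using b(1) bij_def by blast
    show "x = y"
    proof (cases "x \<in> S")
      case True
      show ?thesis
      proof (cases "y \<in> S")
        case True2: True
        then show ?thesis using True e ip unfolding f_def by (simp add: inj_on_def)
      next
        case False
        then obtain v where v: "v \<in> V" "y = \<alpha> v" using hy by blast
        then have "f y = \<beta> v" using False ia unfolding f_def by simp
        moreover have "f x = \<pi> x" using True unfolding f_def by simp
        ultimately have "\<beta> v = \<pi> x" using e by simp
        moreover have "\<beta> v \<in> \<beta> ` V" using v(1) by (rule imageI)
        moreover have "\<pi> x \<in> \<pi> ` S" using True by (rule imageI)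
        ultimately have False using D' by (metis disjoint_iff)
        then show ?thesis ..
      qed
    next
      case False
      then obtain v where v: "v \<in> V" "x = \<alpha> v" using hx by blast
      then have fx: "f x = \<beta> v" using False ia unfolding f_def by simp
      show ?thesis
      proof (cases "y \<in> S")
        case True
        then have "f y = \<pi> y" unfolding f_def by simp
        then have "\<beta> v = \<pi> y" using e fx by simp
        moreover have "\<beta> v \<in> \<beta> ` V" using v(1) by (rule imageI)
        moreover have "\<pi> y \<in> \<pi> ` S" using True by (rule imageI)
        ultimately have False using D' by (metis disjoint_iff)
        then show ?thesis ..
      next
        case False2: False
        then obtain w where w: "w \<in> V" "y = \<alpha> w" using hy by blast
        then have "f y = \<beta> w" using False2 ia unfolding f_def by simp
        then have "v = w" using fx e ib by (simp add: inj_on_def)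
        then show ?thesis using v w by simp
      qed
    qed
  qed
  then obtain \<eta> where et: "bij \<eta>" "\<forall>x\<in>S \<union> \<alpha> ` V. \<eta> x = f x"
    using extend_bij[of "S \<union> \<alpha> ` V" f] unfolding S_def V_def by auto
  define r :: "('f, 'v) subst" where "r = (\<lambda>x. Var (\<eta> x))"
  have ren: "renaming r" unfolding r_def renaming_def using et(1) by blast
  have 1: "subst_goal r X = subst_goal \<rho> X"
  proof (rule subst_goal_cong)
    fix x assume "x \<in> vars_goal X"
    then have "x \<in> S" unfolding S_def .
    then show "r x = \<rho> x" using et(2) unfolding r_def p(2) f_def by simp
  qed
  have cv: "comp_subst \<xi> r v = \<xi>' v" if "v \<in> V" for v
  proof -
    have "\<alpha> v \<notin> S" using D that by blast
    then have "\<eta> (\<alpha> v) = \<beta> v" using et(2) that ia unfolding f_def by simp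
    then show ?thesis unfolding comp_subst_def a(2) b(2) r_def by simp
  qed
  have 2: "subst_atom (comp_subst \<xi> r) h = subst_atom \<xi>' h"
    by (rule subst_atom_cong) (use cv in \<open>auto simp: V_def\<close>)
  have 3: "subst_goal (comp_subst \<xi> r) B = subst_goal \<xi>' B"
    by (rule subst_goal_cong) (use cv in \<open>auto simp: V_def\<close>)
  show ?thesis using ren 1 2 3 by blast
qed

lemma var_transport:
  fixes \<rho> \<xi> \<xi>' :: "('f, 'v) subst"
  assumes "renaming \<rho>" "subst_goal \<rho> A = A'" "subst_goal \<rho> G = G'" "i < length G"
    and "renaming \<xi>" "renaming \<xi>'"
    and "(vars_atom (subst_atom \<xi> h) \<union> vars_goal (subst_goal \<xi> B)) \<inter> vars_goal (A @ G) = {}"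
    and "(vars_atom (subst_atom \<xi>' h) \<union> vars_goal (subst_goal \<xi>' B)) \<inter> vars_goal (A' @ G') = {}"
    and "mgu \<theta> (subst_atom \<xi> h) (G ! i)" "mgu \<theta>' (subst_atom \<xi>' h) (G' ! i)"
  shows "\<exists>\<rho>'. renaming \<rho>' \<and> subst_goal \<rho>' (subst_goal \<theta> (pre A G i \<xi> B)) = subst_goal \<theta>' (pre A' G' i \<xi>' B)"
proof -
  have "subst_goal \<rho> (A @ G) = A' @ G'" using assms(2,3) by simp
  then obtain r where r: "renaming r" "subst_goal r (A @ G) = A' @ G'"
    "subst_atom (comp_subst \<xi> r) h = subst_atom \<xi>' h" "subst_goal (comp_subst \<xi> r) B = subst_goal \<xi>' B"
    using match_ren[OF assms(1) assms(5) assms(6) assms(7)] assms(8) by metis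
  have lenA: "length (subst_goal r A) = length A'" using assms(2) length_subst_goal by metis
  have rA: "subst_goal r A = A'" and rG: "subst_goal r G = G'"
    using r(2) unfolding subst_goal_append append_eq_append_conv[OF disjI1[OF lenA]] by simp_all
  have 1: "subst_goal r (pre A G i \<xi> B) = pre A' G' i \<xi>' B"
    unfolding subst_pre rA rG unfolding pre_def r(4) ..
  have 2: "subst_atom r (subst_atom \<xi> h) = subst_atom \<xi>' h" using r(3) by (simp add: subst_atom_comp)
  have 3: "subst_atom r (G ! i) = G' ! i" using rG assms(4) by auto
  show ?thesis using mgu_variant[OF r(1) 2 3 assms(9) assms(10), of "pre A G i \<xi> B"] 1 by simp
qed

lemma conj_props:
  fixes \<eta> \<kappa> :: "'v \<Rightarrow> 'v" and \<theta>' :: "('f, 'v) subst"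
  assumes ek: "\<And>x. \<eta> (\<kappa> x) = x" and ke: "\<And>x. \<kappa> (\<eta> x) = x"
  defines "r \<equiv> (\<lambda>x. Var (\<eta> x) :: ('f, 'v) trm)"
  defines "\<theta> \<equiv> (\<lambda>x. subst_trm r (\<theta>' (\<kappa> x)))"
  shows "comp_subst r \<theta> = comp_subst \<theta>' r"
    and "mgu \<theta>' b1 b2 \<Longrightarrow> mgu \<theta> (subst_atom r b1) (subst_atom r b2)"
    and "idempotent \<theta>' \<Longrightarrow> idempotent \<theta>"
    and "relevant \<theta>' b1 b2 \<Longrightarrow> relevant \<theta> (subst_atom r b1) (subst_atom r b2)"
proof -
  define r' where "r' = (\<lambda>x. Var (\<kappa> x) :: ('f, 'v) trm)"
  have rr': "comp_subst r r' = Var" unfolding r_def r'_def comp_subst_def using ke by simp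
  show c: "comp_subst r \<theta> = comp_subst \<theta>' r"
    by (rule ext) (simp add: comp_subst_def r_def \<theta>_def ke)
  have ca: "subst_atom \<theta> (subst_atom r a) = subst_atom r (subst_atom \<theta>' a)" for a
    using c by (metis subst_atom_comp)
  show "mgu \<theta> (subst_atom r b1) (subst_atom r b2)" if m: "mgu \<theta>' b1 b2"
    unfolding mgu_def
  proof (intro conjI allI impI)
    show "unifier \<theta> (subst_atom r b1) (subst_atom r b2)"
      using m unfolding mgu_def unifier_def ca by simp
    fix \<sigma> assume u: "unifier \<sigma> (subst_atom r b1) (subst_atom r b2)"
    then have "unifier (comp_subst r \<sigma>) b1 b2" unfolding unifier_def by (simp add: subst_atom_comp)
    then obtain \<delta> where d: "comp_subst r \<sigma> = comp_subst \<theta>' \<delta>" using m unfolding mgu_def by blast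
    have "\<sigma> = comp_subst \<theta> (comp_subst r' \<delta>)"
    proof (rule ext)
      fix x
      have "\<sigma> x = comp_subst r \<sigma> (\<kappa> x)" unfolding comp_subst_def r_def using ek by simp
      also have "\<dots> = comp_subst \<theta>' \<delta> (\<kappa> x)" by (simp only: d)
      also have "\<dots> = subst_trm \<delta> (\<theta>' (\<kappa> x))" by (simp add: comp_subst_def)
      also have "\<dots> = subst_trm (comp_subst r (comp_subst r' \<delta>)) (\<theta>' (\<kappa> x))"
        by (simp only: comp_subst_assoc[symmetric] rr' comp_subst_Var_left)
      also have "\<dots> = comp_subst \<theta> (comp_subst r' \<delta>) x"
        by (simp only: subst_trm_comp comp_subst_def[of \<theta>]) (simp only: \<theta>_def)
      finally show "\<sigma> x = comp_subst \<theta> (comp_subst r' \<delta>) x" .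
    qed
    then show "\<exists>\<delta>. \<sigma> = comp_subst \<theta> \<delta>" by blast
  qed
  show "idempotent \<theta>" if i: "idempotent \<theta>'"
    unfolding idempotent_def
  proof (rule ext)
    fix x
    have "comp_subst \<theta> \<theta> x = subst_trm \<theta> (subst_trm r (\<theta>' (\<kappa> x)))" unfolding comp_subst_def \<theta>_def ..
    also have "\<dots> = subst_trm (comp_subst r \<theta>) (\<theta>' (\<kappa> x))" by (simp only: subst_trm_comp)
    also have "\<dots> = subst_trm r (subst_trm \<theta>' (\<theta>' (\<kappa> x)))" by (simp only: c subst_trm_comp)
    also have "\<dots> = subst_trm r (comp_subst \<theta>' \<theta>' (\<kappa> x))" unfolding comp_subst_def ..
    also have "\<dots> = \<theta> x" using i unfolding idempotent_def \<theta>_def by simp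
    finally show "comp_subst \<theta> \<theta> x = \<theta> x" .
  qed
  show "relevant \<theta> (subst_atom r b1) (subst_atom r b2)" if rel: "relevant \<theta>' b1 b2"
  proof -
    have vr: "vars_trm (subst_trm r t) = \<eta> ` vars_trm t" for t unfolding r_def by (rule vars_ren_trm)
    have va: "vars_atom (subst_atom r t) = \<eta> ` vars_atom t" for t unfolding r_def by (rule vars_ren_atom)
    have dom: "\<kappa> x \<in> dom_subst \<theta>'" if "x \<in> dom_subst \<theta>" for x
    proof -
      have "\<theta> x \<noteq> Var x" using that unfolding dom_subst_def by simp
      then have "\<theta>' (\<kappa> x) \<noteq> Var (\<kappa> x)" unfolding \<theta>_def r_def using ek by auto
      then show ?thesis unfolding dom_subst_def by simp
    qed
    have "vars_subst \<theta> \<subseteq> \<eta> ` vars_subst \<theta>'"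
    proof
      fix y assume "y \<in> vars_subst \<theta>"
      then consider "y \<in> dom_subst \<theta>" | x where "x \<in> dom_subst \<theta>" "y \<in> vars_trm (\<theta> x)"
        unfolding vars_subst_def by blast
      then show "y \<in> \<eta> ` vars_subst \<theta>'"
      proof cases
        case 1
        then have "\<kappa> y \<in> vars_subst \<theta>'" using dom unfolding vars_subst_def by blast
        then show ?thesis using ek by (metis imageI)
      next
        case 2
        then have "y \<in> \<eta> ` vars_trm (\<theta>' (\<kappa> x))" unfolding \<theta>_def vr by simp
        moreover have "vars_trm (\<theta>' (\<kappa> x)) \<subseteq> vars_subst \<theta>'" using dom[OF 2(1)] unfolding vars_subst_def by blast
        ultimately show ?thesis by blast
      qed
    qed
    also have "\<dots> \<subseteq> \<eta> ` (vars_atom b1 \<union> vars_atom b2)" using rel unfolding relevant_def by blast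
    finally show ?thesis unfolding relevant_def va by blast
  qed
qed

lemma ex_transport:
  fixes \<rho> \<xi>' \<theta>' :: "('f, 'v) subst"
  assumes inf: "infinite (UNIV :: 'v set)" and fU: "finite U" and sub: "vars_goal (A @ G) \<subseteq> U"
    and ren: "renaming \<rho>" and rA': "subst_goal \<rho> A' = A" and rG': "subst_goal \<rho> G' = G"
    and "renaming \<xi>'"
    and disj: "(vars_atom (subst_atom \<xi>' h) \<union> vars_goal (subst_goal \<xi>' B)) \<inter> vars_goal (A' @ G') = {}"
    and idem: "idempotent \<theta>'" and mg: "mgu \<theta>' (subst_atom \<xi>' h) (G' ! i)"
    and rel: "relevant \<theta>' (subst_atom \<xi>' h) (G' ! i)" and il: "i < length G'"
  shows "\<exists>\<xi> \<theta> r. renaming \<xi> \<and> (vars_atom (subst_atom \<xi> h) \<union> vars_goal (subst_goal \<xi> B)) \<inter> U = {} \<and>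
     idempotent \<theta> \<and> mgu \<theta> (subst_atom \<xi> h) (G ! i) \<and> relevant \<theta> (subst_atom \<xi> h) (G ! i) \<and>
     renaming r \<and> subst_goal r (subst_goal \<theta>' (pre A' G' i \<xi>' B)) = subst_goal \<theta> (pre A G i \<xi> B)"
proof -
  obtain \<alpha> where a: "bij \<alpha>" "\<alpha> ` (vars_atom h \<union> vars_goal B) \<inter> U = {}"
    using fresh_bij[OF inf fU, of "vars_atom h \<union> vars_goal B"] by auto
  define \<xi> :: "('f, 'v) subst" where "\<xi> = (\<lambda>x. Var (\<alpha> x))"
  have rx: "renaming \<xi>" unfolding \<xi>_def renaming_def using a(1) by blast
  have dx: "(vars_atom (subst_atom \<xi> h) \<union> vars_goal (subst_goal \<xi> B)) \<inter> U = {}"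
    unfolding \<xi>_def vars_ren_atom vars_ren_goal using a(2) by blast
  have rAG': "subst_goal \<rho> (A' @ G') = A @ G" using rA' rG' by simp
  have dx2: "(vars_atom (subst_atom \<xi> h) \<union> vars_goal (subst_goal \<xi> B)) \<inter> vars_goal (subst_goal \<rho> (A' @ G')) = {}"
    unfolding rAG' using dx sub by auto
  obtain r where r: "renaming r" "subst_goal r (A' @ G') = subst_goal \<rho> (A' @ G')"
    "subst_atom (comp_subst \<xi>' r) h = subst_atom \<xi> h" "subst_goal (comp_subst \<xi>' r) B = subst_goal \<xi> B"
    using match_ren[OF ren assms(7) rx disj dx2] by blast
  have lenA: "length (subst_goal r A') = length A" using rA' length_subst_goal by metis
  have rAG: "subst_goal r A' @ subst_goal r G' = A @ G" using r(2) rA' rG' by simp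
  have rA: "subst_goal r A' = A" and rG: "subst_goal r G' = G"
    using rAG unfolding append_eq_append_conv[OF disjI1[OF lenA]] by simp_all
  obtain \<eta> where e: "bij \<eta>" "r = (\<lambda>x. Var (\<eta> x))" using r(1) renaming_def by blast
  have ek: "\<eta> (inv \<eta> x) = x" for x using e(1) by (simp add: bij_def surj_f_inv_f)
  have ke: "inv \<eta> (\<eta> x) = x" for x using e(1) by (simp add: bij_def)
  define \<theta> where "\<theta> = (\<lambda>x. subst_trm r (\<theta>' (inv \<eta> x)))"
  note cp0 = conj_props[of \<eta> "inv \<eta>", OF ek ke, of \<theta>']
  note cp = cp0[unfolded e(2)[symmetric], unfolded \<theta>_def[symmetric]]
  have h1: "subst_atom r (subst_atom \<xi>' h) = subst_atom \<xi> h" using r(3) by (simp add: subst_atom_comp)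
  have h2: "subst_atom r (G' ! i) = G ! i" using rG il by auto
  have m: "mgu \<theta> (subst_atom \<xi> h) (G ! i)" using cp(2)[OF mg] unfolding h1 h2 .
  have id: "idempotent \<theta>" using cp(3)[OF idem] .
  have rl: "relevant \<theta> (subst_atom \<xi> h) (G ! i)" using cp(4)[OF rel] unfolding h1 h2 .
  have "subst_goal r (pre A' G' i \<xi>' B) = pre A G i \<xi> B"
    unfolding subst_pre rA rG unfolding pre_def r(4) ..
  then have "subst_goal \<theta> (pre A G i \<xi> B) = subst_goal (comp_subst r \<theta>) (pre A' G' i \<xi>' B)"
    by (simp add: subst_goal_comp)
  also have "\<dots> = subst_goal r (subst_goal \<theta>' (pre A' G' i \<xi>' B))"
    by (simp only: cp(1) subst_goal_comp)
  finally show ?thesis using rx dx m id rl r(1) by metis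
qed

definition stt :: "('p, 'f, 'v) goal \<Rightarrow> (nat \<Rightarrow> ('p, 'f, 'v) goal) \<Rightarrow> (nat \<Rightarrow> ('f, 'v) subst) \<Rightarrow> nat \<Rightarrow> ('p, 'f, 'v) goal" where
  "stt G0 G \<theta> n = subst_goal (comp_upto \<theta> n) G0 @ G n"

definition used :: "('p, 'f, 'v) goal \<Rightarrow> (nat \<Rightarrow> ('p, 'f, 'v) clause) \<Rightarrow> (nat \<Rightarrow> ('f, 'v) subst) \<Rightarrow> nat \<Rightarrow> 'v set" where
  "used G0 c \<xi> n = vars_goal G0 \<union> (\<Union>k<n. vars_clause (subst_clause (\<xi> k) (c k)))"

definition stepi where
  "stepi P G c \<xi> \<theta> G' i \<longleftrightarrow> c \<in> P \<and> renaming \<xi> \<and> i < length G \<and>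
        idempotent \<theta> \<and> mgu \<theta> (subst_atom \<xi> (fst c)) (G ! i) \<and>
        relevant \<theta> (subst_atom \<xi> (fst c)) (G ! i) \<and>
        G' = subst_goal \<theta> (take i G @ subst_goal \<xi> (snd c) @ drop (Suc i) G)"

lemma sld_step_iff: "sld_step P G c \<xi> \<theta> G' \<longleftrightarrow> (\<exists>i. stepi P G c \<xi> \<theta> G' i)"
  unfolding sld_step_def stepi_def by blast

lemma vars_clause_subst: "vars_clause (subst_clause \<xi> c) = vars_atom (subst_atom \<xi> (fst c)) \<union> vars_goal (subst_goal \<xi> (snd c))"
  by (simp add: vars_clause_def subst_clause_def)

lemma finite_used: "finite (used G0 c \<xi> n)"
  by (simp add: used_def vars_clause_def)

lemma used_Suc: "used G0 c \<xi> (Suc n) = used G0 c \<xi> n \<union> vars_clause (subst_clause (\<xi> n) (c n))"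
  by (auto simp: used_def lessThan_Suc)

lemma length_stt_A: "length (subst_goal (comp_upto \<theta> n) G0) = length G0"
  by simp

lemma stt_Suc:
  assumes "stepi P (G n) (c n) (\<xi> n) (\<theta> n) (G (Suc n)) i"
  shows "stt G0 G \<theta> (Suc n) = subst_goal (\<theta> n) (pre (subst_goal (comp_upto \<theta> n) G0) (G n) i (\<xi> n) (snd (c n)))"
  using assms unfolding stt_def stepi_def pre_def by (simp add: subst_goal_comp)

lemma vars_subst_goal_le: "vars_goal (subst_goal \<theta> X) \<subseteq> vars_goal X \<union> vars_subst \<theta>"
proof
  fix y assume "y \<in> vars_goal (subst_goal \<theta> X)"
  then obtain x where x: "x \<in> vars_goal X" "y \<in> vars_trm (\<theta> x)" unfolding vars_subst_goal by blast
  show "y \<in> vars_goal X \<union> vars_subst \<theta>"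
  proof (cases "x \<in> dom_subst \<theta>")
    case True then show ?thesis using x unfolding vars_subst_def by blast
  next
    case False then have "\<theta> x = Var x" unfolding dom_subst_def by simp
    then show ?thesis using x by simp
  qed
qed

lemma vars_take: "vars_goal (take i G) \<subseteq> vars_goal G"
  unfolding vars_goal_def by (auto dest: in_set_takeD)
lemma vars_drop: "vars_goal (drop i G) \<subseteq> vars_goal G"
  unfolding vars_goal_def by (auto dest: in_set_dropD)

lemma vars_pre: "vars_goal (pre A G i \<xi> B) \<subseteq> vars_goal (A @ G) \<union> vars_goal (subst_goal \<xi> B)"
  unfolding pre_def using vars_take[of i G] vars_drop[of "Suc i" G] by auto

lemma derivation_mono: "sld_derivation_upto P G0 n G c \<xi> \<theta> \<Longrightarrow> m \<le> n \<Longrightarrow> sld_derivation_upto P G0 m G c \<xi> \<theta>"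
  unfolding sld_derivation_upto_def by auto

lemma vars_stt:
  assumes "sld_derivation_upto P G0 n G c \<xi> \<theta>" "k \<le> n"
  shows "vars_goal (stt G0 G \<theta> k) \<subseteq> used G0 c \<xi> k"
  using assms(2)
proof (induction k)
  case 0
  then show ?case using assms(1) unfolding sld_derivation_upto_def stt_def used_def by simp
next
  case (Suc k)
  then have IH: "vars_goal (stt G0 G \<theta> k) \<subseteq> used G0 c \<xi> k" by simp
  from Suc.prems assms(1) have "sld_step P (G k) (c k) (\<xi> k) (\<theta> k) (G (Suc k))"
    unfolding sld_derivation_upto_def by simp
  then obtain i where st: "stepi P (G k) (c k) (\<xi> k) (\<theta> k) (G (Suc k)) i" using sld_step_iff by blast
  let ?A = "subst_goal (comp_upto \<theta> k) G0"
  have sk: "stt G0 G \<theta> k = ?A @ G k" unfolding stt_def ..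
  have il: "i < length (G k)" using st unfolding stepi_def by simp
  have rel: "vars_subst (\<theta> k) \<subseteq> vars_atom (subst_atom (\<xi> k) (fst (c k))) \<union> vars_atom (G k ! i)"
    using st unfolding stepi_def relevant_def by simp
  have "vars_atom (G k ! i) \<subseteq> vars_goal (G k)" using il by (rule vars_atom_nth)
  then have "vars_atom (G k ! i) \<subseteq> used G0 c \<xi> k" using IH unfolding sk by auto
  then have r2: "vars_subst (\<theta> k) \<subseteq> used G0 c \<xi> (Suc k)"
    using rel unfolding used_Suc vars_clause_subst by blast
  have h1: "vars_goal (pre ?A (G k) i (\<xi> k) (snd (c k))) \<subseteq> used G0 c \<xi> (Suc k)"
    using vars_pre[of ?A "G k" i "\<xi> k" "snd (c k)"] IH unfolding sk used_Suc vars_clause_subst by blast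
  have "vars_goal (subst_goal (\<theta> k) (pre ?A (G k) i (\<xi> k) (snd (c k))))
     \<subseteq> vars_goal (pre ?A (G k) i (\<xi> k) (snd (c k))) \<union> vars_subst (\<theta> k)" by (rule vars_subst_goal_le)
  also have "\<dots> \<subseteq> used G0 c \<xi> (Suc k)" using h1 r2 by (rule Un_least)
  finally show ?case unfolding stt_Suc[where G=G and c=c and \<xi>=\<xi> and \<theta>=\<theta> and n=k, OF st] .
qed

lemma split_subst:
  assumes "subst_goal \<rho> (A @ G) = A' @ G'" "length A = length A'"
  shows "subst_goal \<rho> A = A'" "subst_goal \<rho> G = G'"
proof -
  have l: "length (subst_goal \<rho> A) = length A'" using assms(2) by simp
  show "subst_goal \<rho> A = A'" "subst_goal \<rho> G = G'"
    using assms(1) unfolding subst_goal_append append_eq_append_conv[OF disjI1[OF l]] by simp_all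
qed

definition realizes where
  "realizes P G0 s G c \<xi> \<theta> \<longleftrightarrow> sld_derivation_upto P G0 (length s) G c \<xi> \<theta> \<and>
     (\<forall>j<length s. c j = snd (s ! j) \<and> stepi P (G j) (c j) (\<xi> j) (\<theta> j) (G (Suc j)) (fst (s ! j)))"

lemma disj_step:
  assumes "sld_derivation_upto P G0 n G c \<xi> \<theta>" "k < n"
  shows "(vars_atom (subst_atom (\<xi> k) (fst (c k))) \<union> vars_goal (subst_goal (\<xi> k) (snd (c k))))
           \<inter> vars_goal (stt G0 G \<theta> k) = {}"
proof -
  have "vars_clause (subst_clause (\<xi> k) (c k)) \<inter> used G0 c \<xi> k = {}"
    using assms unfolding sld_derivation_upto_def used_def by blast
  moreover have "vars_goal (stt G0 G \<theta> k) \<subseteq> used G0 c \<xi> k"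
    using vars_stt[OF assms(1)] assms(2) by simp
  ultimately show ?thesis unfolding vars_clause_subst by blast
qed

lemma claimA:
  assumes r1: "realizes P G0 s G c \<xi> \<theta>" and r2: "realizes P G0 s G' c' \<xi>' \<theta>'"
  shows "k \<le> length s \<Longrightarrow> \<exists>\<rho>. renaming \<rho> \<and> subst_goal \<rho> (stt G0 G \<theta> k) = stt G0 G' \<theta>' k"
proof (induction k)
  case 0
  have "G 0 = G0" "G' 0 = G0" using r1 r2 unfolding realizes_def sld_derivation_upto_def by auto
  then show ?case unfolding stt_def using renaming_Var by (intro exI[of _ Var]) simp
next
  case (Suc k)
  then obtain \<rho> where rho: "renaming \<rho>" "subst_goal \<rho> (stt G0 G \<theta> k) = stt G0 G' \<theta>' k" by auto
  let ?A = "subst_goal (comp_upto \<theta> k) G0" and ?A' = "subst_goal (comp_upto \<theta>' k) G0"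
  have e: "subst_goal \<rho> (?A @ G k) = ?A' @ G' k" using rho(2) unfolding stt_def .
  have sp: "subst_goal \<rho> ?A = ?A'" "subst_goal \<rho> (G k) = G' k"
    using split_subst[OF e] by simp_all
  have kl: "k < length s" using Suc.prems by simp
  have d1: "sld_derivation_upto P G0 (length s) G c \<xi> \<theta>" and d2: "sld_derivation_upto P G0 (length s) G' c' \<xi>' \<theta>'"
    using r1 r2 unfolding realizes_def by auto
  have s1: "stepi P (G k) (c k) (\<xi> k) (\<theta> k) (G (Suc k)) (fst (s ! k))" and c1: "c k = snd (s ! k)"
    using r1 kl unfolding realizes_def by auto
  have s2: "stepi P (G' k) (c' k) (\<xi>' k) (\<theta>' k) (G' (Suc k)) (fst (s ! k))" and c2: "c' k = snd (s ! k)"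
    using r2 kl unfolding realizes_def by auto
  have cc: "c' k = c k" using c1 c2 by simp
  note dj1 = disj_step[OF d1 kl]
  note dj2 = disj_step[OF d2 kl]
  obtain \<rho>' where "renaming \<rho>'"
    "subst_goal \<rho>' (subst_goal (\<theta> k) (pre ?A (G k) (fst (s ! k)) (\<xi> k) (snd (c k))))
     = subst_goal (\<theta>' k) (pre ?A' (G' k) (fst (s ! k)) (\<xi>' k) (snd (c k)))"
    using var_transport[OF rho(1) sp(1) sp(2), of "fst (s ! k)" "\<xi> k" "\<xi>' k" "fst (c k)" "snd (c k)" "\<theta> k" "\<theta>' k"]
      s1 s2 dj1 dj2 cc unfolding stepi_def stt_def by auto
  then show ?case
    unfolding stt_Suc[where G=G and c=c and \<xi>=\<xi> and \<theta>=\<theta> and n=k, OF s1]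
      stt_Suc[where G=G' and c=c' and \<xi>=\<xi>' and \<theta>=\<theta>' and n=k, OF s2] cc by blast
qed

lemma sld_upto_Suc:
  "sld_derivation_upto P G0 (Suc n) G c \<xi> \<theta> \<longleftrightarrow> sld_derivation_upto P G0 n G c \<xi> \<theta> \<and>
     sld_step P (G n) (c n) (\<xi> n) (\<theta> n) (G (Suc n)) \<and>
     vars_clause (subst_clause (\<xi> n) (c n)) \<inter> used G0 c \<xi> n = {}"
  unfolding sld_derivation_upto_def used_def All_less_Suc by blast

lemma realizes_snoc:
  "realizes P G0 (s @ [x]) G c \<xi> \<theta> \<longleftrightarrow> realizes P G0 s G c \<xi> \<theta> \<and> c (length s) = snd x \<and>
     stepi P (G (length s)) (c (length s)) (\<xi> (length s)) (\<theta> (length s)) (G (Suc (length s))) (fst x) \<and>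
     vars_clause (subst_clause (\<xi> (length s)) (c (length s))) \<inter> used G0 c \<xi> (length s) = {}"
  unfolding realizes_def sld_upto_Suc[symmetric] length_append_singleton
  by (auto simp: nth_append less_Suc_eq sld_upto_Suc sld_step_iff)

lemma realizes_take:
  assumes "realizes P G0 s G c \<xi> \<theta>" "k \<le> length s"
  shows "realizes P G0 (take k s) G c \<xi> \<theta>"
proof -
  have l: "length (take k s) = k" using assms(2) by simp
  have "sld_derivation_upto P G0 k G c \<xi> \<theta>" using assms derivation_mono unfolding realizes_def by blast
  moreover have "\<forall>j<k. c j = snd (take k s ! j) \<and> stepi P (G j) (c j) (\<xi> j) (\<theta> j) (G (Suc j)) (fst (take k s ! j))"
  proof (intro allI impI)
    fix j assume j: "j < k"
    then have "j < length s" "take k s ! j = s ! j" using assms(2) by auto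
    then show "c j = snd (take k s ! j) \<and> stepi P (G j) (c j) (\<xi> j) (\<theta> j) (G (Suc j)) (fst (take k s ! j))"
      using assms(1) unfolding realizes_def by auto
  qed
  ultimately show ?thesis unfolding realizes_def l by blast
qed

lemma comp_upto_cong: "(\<And>j. j < n \<Longrightarrow> \<theta> j = \<theta>' j) \<Longrightarrow> comp_upto \<theta> n = comp_upto \<theta>' n"
  by (induction n) auto

lemma stt_cong: "G k = G' k \<Longrightarrow> (\<And>j. j < k \<Longrightarrow> \<theta> j = \<theta>' j) \<Longrightarrow> stt G0 G \<theta> k = stt G0 G' \<theta>' k"
  unfolding stt_def using comp_upto_cong by metis

lemma used_cong: "(\<And>j. j < k \<Longrightarrow> c j = c' j \<and> \<xi> j = \<xi>' j) \<Longrightarrow> used G0 c \<xi> k = used G0 c' \<xi>' k"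
  unfolding used_def by auto

lemma sld_upto_cong:
  assumes "sld_derivation_upto P G0 n G c \<xi> \<theta>"
    "\<And>k. k \<le> n \<Longrightarrow> G k = G' k" "\<And>k. k < n \<Longrightarrow> c k = c' k \<and> \<xi> k = \<xi>' k \<and> \<theta> k = \<theta>' k"
  shows "sld_derivation_upto P G0 n G' c' \<xi>' \<theta>'"
proof -
  have "G' 0 = G0" using assms(1) assms(2)[of 0] unfolding sld_derivation_upto_def by simp
  moreover have "sld_step P (G' j) (c' j) (\<xi>' j) (\<theta>' j) (G' (Suc j)) \<and>
        vars_clause (subst_clause (\<xi>' j) (c' j)) \<inter>
          (vars_goal G0 \<union> (\<Union>k<j. vars_clause (subst_clause (\<xi>' k) (c' k)))) = {}" if j: "j < n" for j
  proof -
    have e: "G j = G' j" "G (Suc j) = G' (Suc j)" "c j = c' j" "\<xi> j = \<xi>' j" "\<theta> j = \<theta>' j"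
      using assms(2,3) j by auto
    have u: "(\<Union>k<j. vars_clause (subst_clause (\<xi> k) (c k))) = (\<Union>k<j. vars_clause (subst_clause (\<xi>' k) (c' k)))"
      using assms(3) j by (intro SUP_cong) auto
    have h: "sld_step P (G j) (c j) (\<xi> j) (\<theta> j) (G (Suc j)) \<and>
        vars_clause (subst_clause (\<xi> j) (c j)) \<inter>
          (vars_goal G0 \<union> (\<Union>k<j. vars_clause (subst_clause (\<xi> k) (c k)))) = {}"
      using assms(1) j unfolding sld_derivation_upto_def by blast
    show ?thesis using h unfolding e u .
  qed
  ultimately show ?thesis unfolding sld_derivation_upto_def by blast
qed

lemma realizes_cong:
  assumes "realizes P G0 s G c \<xi> \<theta>"
    "\<And>k. k \<le> length s \<Longrightarrow> G k = G' k" "\<And>k. k < length s \<Longrightarrow> c k = c' k \<and> \<xi> k = \<xi>' k \<and> \<theta> k = \<theta>' k"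
  shows "realizes P G0 s G' c' \<xi>' \<theta>'"
proof -
  have "sld_derivation_upto P G0 (length s) G' c' \<xi>' \<theta>'"
    using sld_upto_cong assms unfolding realizes_def by blast
  moreover have "\<forall>j<length s. c' j = snd (s ! j) \<and> stepi P (G' j) (c' j) (\<xi>' j) (\<theta>' j) (G' (Suc j)) (fst (s ! j))"
  proof (intro allI impI)
    fix j assume j: "j < length s"
    then have "G j = G' j" "G (Suc j) = G' (Suc j)" "c j = c' j" "\<xi> j = \<xi>' j" "\<theta> j = \<theta>' j"
      using assms(2,3) by auto
    then show "c' j = snd (s ! j) \<and> stepi P (G' j) (c' j) (\<xi>' j) (\<theta>' j) (G' (Suc j)) (fst (s ! j))"
      using assms(1) j unfolding realizes_def by metis
  qed
  ultimately show ?thesis unfolding realizes_def by blast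
qed

definition unpr where
  "unpr G0 G \<theta> n \<longleftrightarrow> \<not> (\<exists>i j \<tau>. i < j \<and> j \<le> n \<and> renaming \<tau> \<and> stt G0 G \<theta> j = subst_goal \<tau> (stt G0 G \<theta> i))"

lemma prune_transfer:
  assumes "\<And>k. k \<le> n \<Longrightarrow> \<exists>\<rho>. renaming \<rho> \<and> subst_goal \<rho> (stt G0 G \<theta> k) = stt G0 G' \<theta>' k"
    and "unpr G0 G \<theta> n"
  shows "unpr G0 G' \<theta>' n"
  unfolding unpr_def
proof
  assume "\<exists>i j \<tau>. i < j \<and> j \<le> n \<and> renaming \<tau> \<and> stt G0 G' \<theta>' j = subst_goal \<tau> (stt G0 G' \<theta>' i)"
  then obtain i j \<tau> where h: "i < j" "j \<le> n" "renaming \<tau>" "stt G0 G' \<theta>' j = subst_goal \<tau> (stt G0 G' \<theta>' i)"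
    by blast
  obtain ri where ri: "renaming ri" "subst_goal ri (stt G0 G \<theta> i) = stt G0 G' \<theta>' i" using assms(1)[of i] h by auto
  obtain rj where rj: "renaming rj" "subst_goal rj (stt G0 G \<theta> j) = stt G0 G' \<theta>' j" using assms(1)[of j] h by auto
  obtain rj' where rj': "renaming rj'" "comp_subst rj rj' = Var" using renaming_inv[OF rj(1)] by blast
  have "stt G0 G \<theta> j = subst_goal (comp_subst rj rj') (stt G0 G \<theta> j)" using rj'(2) by simp
  also have "\<dots> = subst_goal rj' (subst_goal \<tau> (subst_goal ri (stt G0 G \<theta> i)))"
    unfolding subst_goal_comp rj(2) h(4) ri(2) ..
  also have "\<dots> = subst_goal (comp_subst ri (comp_subst \<tau> rj')) (stt G0 G \<theta> i)"
    by (simp only: subst_goal_comp)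
  finally have "stt G0 G \<theta> j = subst_goal (comp_subst ri (comp_subst \<tau> rj')) (stt G0 G \<theta> i)" .
  moreover have "renaming (comp_subst ri (comp_subst \<tau> rj'))" using renaming_comp ri(1) h(3) rj'(1) by blast
  ultimately show False using assms(2) h(1,2) unfolding unpr_def by blast
qed

lemma unpr_mono: "unpr G0 G \<theta> n \<Longrightarrow> k \<le> n \<Longrightarrow> unpr G0 G \<theta> k"
  unfolding unpr_def by auto

lemma extend_gen:
  fixes G :: "nat \<Rightarrow> ('p, 'f, 'v) goal"
  assumes inf: "infinite (UNIV :: 'v set)"
    and rD: "realizes P G0 s G c \<xi> \<theta>" and rE: "realizes P G0 (t @ [x]) G2 c2 \<xi>2 \<theta>2"
    and rho: "renaming \<rho>" "subst_goal \<rho> (stt G0 G2 \<theta>2 (length t)) = stt G0 G \<theta> (length s)"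
  shows "\<exists>Gn \<xi>n \<theta>n. realizes P G0 (s @ [x]) (G(Suc (length s) := Gn)) (c(length s := snd x))
            (\<xi>(length s := \<xi>n)) (\<theta>(length s := \<theta>n)) \<and>
          (\<exists>r. renaming r \<and> subst_goal r (stt G0 G2 \<theta>2 (Suc (length t)))
                = stt G0 (G(Suc (length s) := Gn)) (\<theta>(length s := \<theta>n)) (Suc (length s)))"
proof -
  define n where "n = length s"
  define m where "m = length t"
  define i where "i = fst x"
  define h where "h = fst (snd x)"
  define B where "B = snd (snd x)"
  have sx: "snd x = (h, B)" unfolding h_def B_def by simp
  have c2m: "c2 m = snd x"
    and stE: "stepi P (G2 m) (c2 m) (\<xi>2 m) (\<theta>2 m) (G2 (Suc m)) i"
    using rE unfolding realizes_snoc m_def i_def by auto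
  have dE: "sld_derivation_upto P G0 (Suc m) G2 c2 \<xi>2 \<theta>2" using rE unfolding realizes_def m_def by simp
  have dD: "sld_derivation_upto P G0 n G c \<xi> \<theta>" using rD unfolding realizes_def n_def by simp
  let ?A2 = "subst_goal (comp_upto \<theta>2 m) G0" and ?A = "subst_goal (comp_upto \<theta> n) G0"
  have e: "subst_goal \<rho> (?A2 @ G2 m) = ?A @ G n" using rho(2) unfolding stt_def m_def n_def .
  have sp: "subst_goal \<rho> ?A2 = ?A" "subst_goal \<rho> (G2 m) = G n" using split_subst[OF e] by simp_all
  have sub: "vars_goal (?A @ G n) \<subseteq> used G0 c \<xi> n" using vars_stt[OF dD, of n] unfolding stt_def by simp
  have djE: "(vars_atom (subst_atom (\<xi>2 m) h) \<union> vars_goal (subst_goal (\<xi>2 m) B)) \<inter> vars_goal (?A2 @ G2 m) = {}"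
    using disj_step[OF dE, of m] c2m sx unfolding stt_def by simp
  have stE': "renaming (\<xi>2 m)" "idempotent (\<theta>2 m)" "mgu (\<theta>2 m) (subst_atom (\<xi>2 m) h) (G2 m ! i)"
    "relevant (\<theta>2 m) (subst_atom (\<xi>2 m) h) (G2 m ! i)" "i < length (G2 m)" "snd x \<in> P"
    using stE c2m sx unfolding stepi_def by auto
  obtain \<xi>n \<theta>n r where tr: "renaming \<xi>n" "(vars_atom (subst_atom \<xi>n h) \<union> vars_goal (subst_goal \<xi>n B)) \<inter> used G0 c \<xi> n = {}"
    "idempotent \<theta>n" "mgu \<theta>n (subst_atom \<xi>n h) (G n ! i)" "relevant \<theta>n (subst_atom \<xi>n h) (G n ! i)"
    "renaming r" "subst_goal r (subst_goal (\<theta>2 m) (pre ?A2 (G2 m) i (\<xi>2 m) B)) = subst_goal \<theta>n (pre ?A (G n) i \<xi>n B)"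
    using ex_transport[OF inf finite_used sub rho(1) sp(1) sp(2) stE'(1) djE stE'(2) stE'(3) stE'(4) stE'(5)] by blast
  define Gn where "Gn = subst_goal \<theta>n (take i (G n) @ subst_goal \<xi>n B @ drop (Suc i) (G n))"
  define G' where "G' = G(Suc n := Gn)"
  define c' where "c' = c(n := snd x)"
  define \<xi>' where "\<xi>' = \<xi>(n := \<xi>n)"
  define \<theta>' where "\<theta>' = \<theta>(n := \<theta>n)"
  have r1: "realizes P G0 s G' c' \<xi>' \<theta>'"
    by (rule realizes_cong[OF rD]) (auto simp: G'_def c'_def \<xi>'_def \<theta>'_def n_def)
  have ln: "length (G n) = length (G2 m)" using sp(2) by (metis length_subst_goal)
  have st': "stepi P (G' n) (c' n) (\<xi>' n) (\<theta>' n) (G' (Suc n)) i"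
    unfolding stepi_def G'_def c'_def \<xi>'_def \<theta>'_def Gn_def using tr stE' ln sx by auto
  have uc: "used G0 c' \<xi>' n = used G0 c \<xi> n" by (rule used_cong) (auto simp: c'_def \<xi>'_def)
  have dj': "vars_clause (subst_clause (\<xi>' n) (c' n)) \<inter> used G0 c' \<xi>' n = {}"
    unfolding uc vars_clause_subst using tr(2) sx by (simp add: c'_def \<xi>'_def)
  have R: "realizes P G0 (s @ [x]) G' c' \<xi>' \<theta>'"
    unfolding realizes_snoc n_def[symmetric] i_def[symmetric] using r1 st' dj' by (simp add: c'_def)
  have cu: "comp_upto \<theta>' n = comp_upto \<theta> n" by (rule comp_upto_cong) (simp add: \<theta>'_def)
  have "stt G0 G' \<theta>' (Suc n) = subst_goal \<theta>n (pre ?A (G n) i \<xi>n B)"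
    unfolding stt_Suc[where G=G' and c=c' and \<xi>=\<xi>' and \<theta>=\<theta>' and n=n, OF st'] cu
    by (simp add: G'_def \<theta>'_def \<xi>'_def c'_def sx)
  moreover have "stt G0 G2 \<theta>2 (Suc m) = subst_goal (\<theta>2 m) (pre ?A2 (G2 m) i (\<xi>2 m) B)"
    unfolding stt_Suc[where G=G2 and c=c2 and \<xi>=\<xi>2 and \<theta>=\<theta>2 and n=m, OF stE] c2m sx by simp
  ultimately show ?thesis using R tr(6,7) unfolding G'_def c'_def \<xi>'_def \<theta>'_def n_def m_def by metis
qed



lemma unpr_cong:
  assumes "\<And>k. k \<le> n \<Longrightarrow> stt G0 G \<theta> k = stt G0 G' \<theta>' k" "unpr G0 G \<theta> n"
  shows "unpr G0 G' \<theta>' n"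
  by (rule prune_transfer[OF _ assms(2)]) (use assms(1) renaming_Var in \<open>metis subst_goal_Var\<close>)

lemma loop_removal:
  fixes G :: "nat \<Rightarrow> ('p, 'f, 'v) goal"
  assumes inf: "infinite (UNIV :: 'v set)"
  shows "realizes P G0 s G c \<xi> \<theta> \<Longrightarrow> \<exists>s' G' c' \<xi>' \<theta>'. realizes P G0 s' G' c' \<xi>' \<theta>' \<and> unpr G0 G' \<theta>' (length s') \<and>
     (\<exists>\<rho>. renaming \<rho> \<and> subst_goal \<rho> (stt G0 G \<theta> (length s)) = stt G0 G' \<theta>' (length s'))"
proof (induction s rule: rev_induct)
  case Nil
  have "unpr G0 G \<theta> 0" unfolding unpr_def by simp
  then show ?case using Nil renaming_Var by (metis list.size(3) subst_goal_Var)
next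
  case (snoc x s)
  have rs: "realizes P G0 s G c \<xi> \<theta>" using snoc.prems unfolding realizes_snoc by simp
  obtain s' G' c' \<xi>' \<theta>' \<rho> where ih: "realizes P G0 s' G' c' \<xi>' \<theta>'" "unpr G0 G' \<theta>' (length s')"
    "renaming \<rho>" "subst_goal \<rho> (stt G0 G \<theta> (length s)) = stt G0 G' \<theta>' (length s')"
    using snoc.IH[OF rs] by blast
  define m where "m = length s'"
  obtain Gn \<xi>n \<theta>n r where ex: "realizes P G0 (s' @ [x]) (G'(Suc m := Gn)) (c'(m := snd x)) (\<xi>'(m := \<xi>n)) (\<theta>'(m := \<theta>n))"
    "renaming r" "subst_goal r (stt G0 G \<theta> (Suc (length s))) = stt G0 (G'(Suc m := Gn)) (\<theta>'(m := \<theta>n)) (Suc m)"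
    using extend_gen[OF inf ih(1) snoc.prems ih(3) ih(4)] unfolding m_def by blast
  define G'' where "G'' = G'(Suc m := Gn)"
  define \<theta>'' where "\<theta>'' = \<theta>'(m := \<theta>n)"
  define c'' where "c'' = c'(m := snd x)"
  define \<xi>'' where "\<xi>'' = \<xi>'(m := \<xi>n)"
  have R: "realizes P G0 (s' @ [x]) G'' c'' \<xi>'' \<theta>''" using ex(1) unfolding G''_def c''_def \<xi>''_def \<theta>''_def .
  have V: "subst_goal r (stt G0 G \<theta> (length (s @ [x]))) = stt G0 G'' \<theta>'' (Suc m)"
    using ex(3) unfolding G''_def \<theta>''_def by simp
  have eqk: "stt G0 G'' \<theta>'' k = stt G0 G' \<theta>' k" if "k \<le> m" for k
    by (rule stt_cong) (use that in \<open>auto simp: G''_def \<theta>''_def\<close>)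
  show ?case
  proof (cases "unpr G0 G'' \<theta>'' (Suc m)")
    case True
    then show ?thesis using R V ex(2) unfolding m_def by fastforce
  next
    case False
    then obtain i j \<tau> where h: "i < j" "j \<le> Suc m" "renaming \<tau>" "stt G0 G'' \<theta>'' j = subst_goal \<tau> (stt G0 G'' \<theta>'' i)"
      unfolding unpr_def by blast
    have jm: "j = Suc m"
    proof (rule ccontr)
      assume "j \<noteq> Suc m"
      then have "j \<le> m" using h(2) by simp
      then have "stt G0 G' \<theta>' j = subst_goal \<tau> (stt G0 G' \<theta>' i)" using h eqk by simp
      then show False using ih(2) h(1,3) \<open>j \<le> m\<close> unfolding unpr_def m_def by blast
    qed
    have im: "i \<le> m" using h(1) jm by simp
    have R2: "realizes P G0 (take i (s' @ [x])) G'' c'' \<xi>'' \<theta>''" using realizes_take[OF R, of i] im unfolding m_def by simp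
    have li: "length (take i (s' @ [x])) = i" using im unfolding m_def by simp
    have U: "unpr G0 G'' \<theta>'' i"
      using unpr_cong[of i G0 G' \<theta>' G'' \<theta>''] eqk im unpr_mono[OF ih(2), of i] unfolding m_def by simp
    obtain \<tau>' where t': "renaming \<tau>'" "comp_subst \<tau> \<tau>' = Var" using renaming_inv[OF h(3)] by blast
    have "stt G0 G'' \<theta>'' i = subst_goal (comp_subst \<tau> \<tau>') (stt G0 G'' \<theta>'' i)" using t'(2) by simp
    also have "\<dots> = subst_goal \<tau>' (stt G0 G'' \<theta>'' (Suc m))" unfolding subst_goal_comp h(4)[symmetric] jm ..
    also have "\<dots> = subst_goal (comp_subst r \<tau>') (stt G0 G \<theta> (length (s @ [x])))"
      unfolding subst_goal_comp V ..
    finally have "subst_goal (comp_subst r \<tau>') (stt G0 G \<theta> (length (s @ [x]))) = stt G0 G'' \<theta>'' (length (take i (s' @ [x])))"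
      unfolding li by simp
    moreover have "renaming (comp_subst r \<tau>')" using renaming_comp ex(2) t'(1) by blast
    ultimately show ?thesis using R2 U li by metis
  qed
qed

section \<open>Koenig\<close>

fun kpath :: "('a list \<Rightarrow> bool) \<Rightarrow> nat \<Rightarrow> 'a list" where
  "kpath R 0 = []"
| "kpath R (Suc n) = kpath R n @ [SOME x. R (kpath R n @ [x])]"

lemma length_kpath[simp]: "length (kpath R n) = n"
  by (induction n) auto

lemma kpath_prefix: "n \<le> m \<Longrightarrow> kpath R n = take n (kpath R m)"
proof (induction m)
  case 0 then show ?case by simp
next
  case (Suc m)
  show ?case
  proof (cases "n = Suc m")
    case True then show ?thesis by simp
  next
    case False
    then have "n \<le> m" using Suc.prems by simp
    then show ?thesis using Suc.IH by simp
  qed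
qed

lemma koenig:
  fixes T :: "'a list set"
  assumes pc: "\<And>s x. s @ [x] \<in> T \<Longrightarrow> s \<in> T"
    and fb: "\<And>s. finite {x. s @ [x] \<in> T}"
    and ub: "\<And>n. \<exists>s\<in>T. length s = n"
  shows "\<exists>f. \<forall>n. map f [0..<n] \<in> T"
proof -
  have pc': "s @ t \<in> T \<Longrightarrow> s \<in> T" for s t
  proof (induction t rule: rev_induct)
    case Nil then show ?case by simp
  next
    case (snoc x t) then show ?case using pc[of "s @ t" x] by simp
  qed
  define rich where "rich s \<longleftrightarrow> (\<forall>n. \<exists>t. length t = n \<and> s @ t \<in> T)" for s
  have r0: "rich []" unfolding rich_def using ub by auto
  have rstep: "\<exists>x. rich (s @ [x])" if rs: "rich s" for s
  proof (rule ccontr)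
    assume "\<not> (\<exists>x. rich (s @ [x]))"
    then have nr: "\<forall>x. \<exists>n. \<forall>t. length t = n \<longrightarrow> s @ [x] @ t \<notin> T" unfolding rich_def by auto
    define nx where "nx x = (SOME n. \<forall>t. length t = n \<longrightarrow> s @ [x] @ t \<notin> T)" for x
    have nx: "\<forall>t. length t = nx x \<longrightarrow> s @ [x] @ t \<notin> T" for x
      unfolding nx_def by (rule someI_ex) (rule nr[rule_format])
    define C where "C = {x. s @ [x] \<in> T}"
    define N where "N = Max (insert 0 (nx ` C))"
    have fC: "finite C" unfolding C_def by (rule fb)
    obtain t where t: "length t = Suc N" "s @ t \<in> T" using rs unfolding rich_def by blast
    then obtain x t' where xt: "t = x # t'" by (cases t) auto
    have "s @ [x] \<in> T" using t(2) pc'[of "s @ [x]" t'] xt by simp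
    then have "x \<in> C" unfolding C_def by simp
    then have "nx x \<le> N" unfolding N_def using fC by (simp add: Max_ge)
    then have "nx x \<le> length t'" using t(1) xt by simp
    then have "length (take (nx x) t') = nx x" by simp
    moreover have "s @ [x] @ take (nx x) t' \<in> T"
      using t(2) xt pc'[of "s @ [x] @ take (nx x) t'" "drop (nx x) t'"] by simp
    ultimately show False using nx[of x] by blast
  qed
  define p where "p = kpath rich"
  have rp: "rich (p n)" for n
  proof (induction n)
    case 0 then show ?case using r0 unfolding p_def by simp
  next
    case (Suc n)
    have "rich (kpath rich n @ [SOME x. rich (kpath rich n @ [x])])"
      using rstep[OF Suc[unfolded p_def]] by (rule someI_ex)
    then show ?case unfolding p_def by simp
  qed
  define f where "f k = p (Suc k) ! k" for k
  have mp: "map f [0..<n] = p n" for n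
  proof (rule nth_equalityI)
    show "length (map f [0..<n]) = length (p n)" unfolding p_def by simp
    fix k assume "k < length (map f [0..<n])"
    then have k: "k < n" by simp
    have "p (Suc k) = take (Suc k) (p n)" unfolding p_def using kpath_prefix[of "Suc k" n rich] k by linarith
    then show "map f [0..<n] ! k = p n ! k" using k unfolding f_def by simp
  qed
  have "p n \<in> T" for n
  proof -
    obtain t where "length t = 0" "p n @ t \<in> T" using rp[of n] unfolding rich_def by blast
    then show ?thesis by simp
  qed
  then show ?thesis using mp by metis
qed

lemma to_realizes:
  assumes "sld_derivation_upto P G0 n G c \<xi> \<theta>"
  shows "\<exists>s. length s = n \<and> realizes P G0 s G c \<xi> \<theta>"
proof -
  define s where "s = map (\<lambda>j. ((SOME i. stepi P (G j) (c j) (\<xi> j) (\<theta> j) (G (Suc j)) i), c j)) [0..<n]"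
  have "c j = snd (s ! j) \<and> stepi P (G j) (c j) (\<xi> j) (\<theta> j) (G (Suc j)) (fst (s ! j))" if j: "j < n" for j
  proof -
    have "sld_step P (G j) (c j) (\<xi> j) (\<theta> j) (G (Suc j))" using assms j unfolding sld_derivation_upto_def by blast
    then have "\<exists>i. stepi P (G j) (c j) (\<xi> j) (\<theta> j) (G (Suc j)) i" using sld_step_iff by blast
    then have "stepi P (G j) (c j) (\<xi> j) (\<theta> j) (G (Suc j)) (SOME i. stepi P (G j) (c j) (\<xi> j) (\<theta> j) (G (Suc j)) i)"
      by (rule someI_ex)
    then show ?thesis using j unfolding s_def by simp
  qed
  moreover have "length s = n" unfolding s_def by simp
  ultimately show ?thesis using assms unfolding realizes_def by metis
qed

definition maxb :: "('p, 'f, 'v) clause set \<Rightarrow> nat" where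
  "maxb P = Max (insert 0 ((\<lambda>c. length (snd c)) ` P))"

lemma length_bound:
  assumes "finite P" "sld_derivation_upto P G0 n G c \<xi> \<theta>"
  shows "k \<le> n \<Longrightarrow> length (G k) \<le> length G0 + k * maxb P"
proof (induction k)
  case 0 then show ?case using assms(2) unfolding sld_derivation_upto_def by simp
next
  case (Suc k)
  then have IH: "length (G k) \<le> length G0 + k * maxb P" by simp
  have "sld_step P (G k) (c k) (\<xi> k) (\<theta> k) (G (Suc k))" using assms(2) Suc.prems unfolding sld_derivation_upto_def by simp
  then obtain i where st: "stepi P (G k) (c k) (\<xi> k) (\<theta> k) (G (Suc k)) i" using sld_step_iff by blast
  then have il: "i < length (G k)" and cP: "c k \<in> P" unfolding stepi_def by auto
  have "length (G (Suc k)) = i + length (snd (c k)) + (length (G k) - Suc i)"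
    using st il unfolding stepi_def by simp
  also have "\<dots> \<le> length (G k) + length (snd (c k))" using il by simp
  also have "length (snd (c k)) \<le> maxb P" unfolding maxb_def using assms(1) cP by (simp add: Max_ge)
  finally show ?case using IH by simp
qed

definition TT where
  "TT P G0 = {s. \<exists>G c \<xi> \<theta>. realizes P G0 s G c \<xi> \<theta> \<and> unpr G0 G \<theta> (length s)}"

lemma TT_pc: "s @ [x] \<in> TT P G0 \<Longrightarrow> s \<in> TT P G0"
proof -
  assume "s @ [x] \<in> TT P G0"
  then obtain G c \<xi> \<theta> where r: "realizes P G0 (s @ [x]) G c \<xi> \<theta>" "unpr G0 G \<theta> (Suc (length s))"
    unfolding TT_def by auto
  have "realizes P G0 s G c \<xi> \<theta>" using r(1) unfolding realizes_snoc by simp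
  moreover have "unpr G0 G \<theta> (length s)" using unpr_mono[OF r(2)] by simp
  ultimately show ?thesis unfolding TT_def by blast
qed

lemma stt_length: "length (stt G0 G \<theta> n) = length G0 + length (G n)"
  unfolding stt_def by simp

lemma TT_fb:
  assumes "finite P"
  shows "finite {x. s @ [x] \<in> TT P G0}"
proof (cases "{x. s @ [x] \<in> TT P G0} = {}")
  case True then show ?thesis by (simp only: finite.emptyI)
next
  case False
  then obtain x0 where "s @ [x0] \<in> TT P G0" by blast
  then obtain G c \<xi> \<theta> where r0: "realizes P G0 (s @ [x0]) G c \<xi> \<theta>" unfolding TT_def by blast
  then have r0s: "realizes P G0 s G c \<xi> \<theta>" unfolding realizes_snoc by simp
  have "{x. s @ [x] \<in> TT P G0} \<subseteq> {..<length (G (length s))} \<times> P"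
  proof
    fix x assume "x \<in> {x. s @ [x] \<in> TT P G0}"
    then obtain G' c' \<xi>' \<theta>' where r: "realizes P G0 (s @ [x]) G' c' \<xi>' \<theta>'" unfolding TT_def by blast
    then have rs: "realizes P G0 s G' c' \<xi>' \<theta>'" and st: "stepi P (G' (length s)) (c' (length s)) (\<xi>' (length s)) (\<theta>' (length s)) (G' (Suc (length s))) (fst x)"
      and cx: "c' (length s) = snd x"
      unfolding realizes_snoc by auto
    obtain \<rho> where "subst_goal \<rho> (stt G0 G' \<theta>' (length s)) = stt G0 G \<theta> (length s)"
      using claimA[OF rs r0s, of "length s"] by auto
    then have "length (stt G0 G' \<theta>' (length s)) = length (stt G0 G \<theta> (length s))" by (metis length_subst_goal)
    then have "length (G' (length s)) = length (G (length s))" unfolding stt_length by simp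
    then show "x \<in> {..<length (G (length s))} \<times> P" using st cx unfolding stepi_def by (cases x) auto
  qed
  then show ?thesis using assms finite_subset by blast
qed

lemma TT_ub:
  fixes G0 :: "('p, 'f, 'v) goal"
  assumes inf: "infinite (UNIV :: 'v set)" and fP: "finite P"
    and unb: "\<And>l. \<exists>n G c \<xi> \<theta>. sld_derivation_upto P G0 n G c \<xi> \<theta> \<and> (\<exists>k\<le>n. length (G k) > l)"
  shows "\<exists>s\<in>TT P G0. length s = d"
proof -
  obtain n G c \<xi> \<theta> k where d: "sld_derivation_upto P G0 n G c \<xi> \<theta>" "k \<le> n"
    "length (G k) > length G0 + d * maxb P"
    using unb[of "length G0 + d * maxb P"] by blast
  have dk: "sld_derivation_upto P G0 k G c \<xi> \<theta>" using derivation_mono[OF d(1) d(2)] .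
  obtain s where s: "length s = k" "realizes P G0 s G c \<xi> \<theta>" using to_realizes[OF dk] by blast
  obtain s' G' c' \<xi>' \<theta>' \<rho> where lr: "realizes P G0 s' G' c' \<xi>' \<theta>'" "unpr G0 G' \<theta>' (length s')"
    "subst_goal \<rho> (stt G0 G \<theta> (length s)) = stt G0 G' \<theta>' (length s')"
    using loop_removal[OF inf s(2)] by blast
  have "length (stt G0 G \<theta> (length s)) = length (stt G0 G' \<theta>' (length s'))" using lr(3) by (metis length_subst_goal)
  then have le: "length (G' (length s')) = length (G k)" unfolding stt_length s(1) by simp
  have "length (G' (length s')) \<le> length G0 + length s' * maxb P"
    using length_bound[OF fP, of G0 "length s'" G' c' \<xi>' \<theta>' "length s'"] lr(1) unfolding realizes_def by simp
  then have "d * maxb P < length s' * maxb P" using d(3) le by linarith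
  then have ds: "d \<le> length s'" by (metis less_imp_le_nat mult_less_cancel2)
  have "realizes P G0 (take d s') G' c' \<xi>' \<theta>'" using realizes_take[OF lr(1) ds] .
  moreover have "unpr G0 G' \<theta>' (length (take d s'))" using unpr_mono[OF lr(2)] ds by simp
  moreover have "length (take d s') = d" using ds by simp
  ultimately show ?thesis unfolding TT_def by blast
qed

definition pG :: "'a \<times> 'b \<times> 'c \<times> 'd \<Rightarrow> 'a" where "pG D = fst D"
definition pc :: "'a \<times> 'b \<times> 'c \<times> 'd \<Rightarrow> 'b" where "pc D = fst (snd D)"
definition px :: "'a \<times> 'b \<times> 'c \<times> 'd \<Rightarrow> 'c" where "px D = fst (snd (snd D))"
definition pt :: "'a \<times> 'b \<times> 'c \<times> 'd \<Rightarrow> 'd" where "pt D = snd (snd (snd D))"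

lemma proj_simps[simp]: "pG (a, b, c, d) = a" "pc (a, b, c, d) = b" "px (a, b, c, d) = c" "pt (a, b, c, d) = d"
  by (simp_all add: pG_def pc_def px_def pt_def)

definition AG :: "nat \<Rightarrow> (nat \<Rightarrow> 'a) \<times> (nat \<Rightarrow> 'b) \<times> (nat \<Rightarrow> 'c) \<times> (nat \<Rightarrow> 'd) \<Rightarrow> (nat \<Rightarrow> 'a) \<times> (nat \<Rightarrow> 'b) \<times> (nat \<Rightarrow> 'c) \<times> (nat \<Rightarrow> 'd) \<Rightarrow> bool" where
  "AG n D D' \<longleftrightarrow> (\<forall>k\<le>n. pG D k = pG D' k) \<and> (\<forall>k<n. pc D k = pc D' k \<and> px D k = px D' k \<and> pt D k = pt D' k)"

lemma AG_refl: "AG n D D" unfolding AG_def by simp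

lemma AG_trans: "AG n D D' \<Longrightarrow> AG m D' D'' \<Longrightarrow> n \<le> m \<Longrightarrow> AG n D D''"
  unfolding AG_def by force

lemma inf_deriv:
  fixes G0 :: "('p, 'f, 'v) goal" and f :: "nat \<Rightarrow> nat \<times> ('p, 'f, 'v) clause"
  assumes inf: "infinite (UNIV :: 'v set)" and path: "\<And>n. map f [0..<n] \<in> TT P G0"
  shows "\<exists>G c \<xi> \<theta>. sld_derivation_inf P G0 G c \<xi> \<theta> \<and> \<not> pruned_EVR_L G0 G \<theta>"
proof -
  define pf where "pf n = map f [0..<n]" for n
  have pfS: "pf (Suc n) = pf n @ [f n]" for n unfolding pf_def by simp
  have lpf: "length (pf n) = n" for n unfolding pf_def by simp
  define RT where "RT n D \<longleftrightarrow> realizes P G0 (pf n) (pG D) (pc D) (px D) (pt D)" for n and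
    D :: "(nat \<Rightarrow> ('p, 'f, 'v) goal) \<times> (nat \<Rightarrow> ('p, 'f, 'v) clause) \<times> (nat \<Rightarrow> ('f, 'v) subst) \<times> (nat \<Rightarrow> ('f, 'v) subst)"
  have ex: "\<exists>D'. RT (Suc n) D' \<and> AG n D D'" if rd: "RT n D" for n D
  proof -
    obtain G c \<xi> \<theta> where D: "D = (G, c, \<xi>, \<theta>)" by (cases D) auto
    have rD: "realizes P G0 (pf n) G c \<xi> \<theta>" using rd unfolding RT_def D by simp
    from path[of "Suc n"] obtain G2 c2 \<xi>2 \<theta>2 where rE: "realizes P G0 (pf n @ [f n]) G2 c2 \<xi>2 \<theta>2"
      unfolding TT_def pf_def[symmetric] pfS by blast
    then have rEs: "realizes P G0 (pf n) G2 c2 \<xi>2 \<theta>2" unfolding realizes_snoc by simp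
    obtain \<rho> where rho: "renaming \<rho>" "subst_goal \<rho> (stt G0 G2 \<theta>2 (length (pf n))) = stt G0 G \<theta> (length (pf n))"
      using claimA[OF rEs rD, of "length (pf n)"] by auto
    obtain Gn \<xi>n \<theta>n where e: "realizes P G0 (pf n @ [f n]) (G(Suc (length (pf n)) := Gn)) (c(length (pf n) := snd (f n)))
            (\<xi>(length (pf n) := \<xi>n)) (\<theta>(length (pf n) := \<theta>n))"
      using extend_gen[OF inf rD rE rho] by blast
    define D' where "D' = (G(Suc n := Gn), c(n := snd (f n)), \<xi>(n := \<xi>n), \<theta>(n := \<theta>n))"
    have "RT (Suc n) D'" unfolding RT_def D'_def pfS using e unfolding lpf by simp
    moreover have "AG n D D'" unfolding AG_def D D'_def by simp
    ultimately show ?thesis by blast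
  qed
  define D0 :: "(nat \<Rightarrow> ('p, 'f, 'v) goal) \<times> (nat \<Rightarrow> ('p, 'f, 'v) clause) \<times> (nat \<Rightarrow> ('f, 'v) subst) \<times> (nat \<Rightarrow> ('f, 'v) subst)"
    where "D0 = (\<lambda>_. G0, undefined, undefined, undefined)"
  have rt0: "RT 0 D0" unfolding RT_def D0_def realizes_def sld_derivation_upto_def pf_def by simp
  define ds where "ds = rec_nat D0 (\<lambda>n D. SOME D'. RT (Suc n) D' \<and> AG n D D')"
  have ds0: "ds 0 = D0" unfolding ds_def by simp
  have dsS: "ds (Suc n) = (SOME D'. RT (Suc n) D' \<and> AG n (ds n) D')" for n unfolding ds_def by simp
  have dsp: "RT n (ds n) \<and> AG n (ds n) (ds (Suc n))" for n
  proof (induction n)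
    case 0
    show ?case unfolding ds0 using someI_ex[OF ex[OF rt0]] rt0 unfolding dsS ds0 by simp
  next
    case (Suc n)
    then have r: "RT (Suc n) (ds (Suc n))" using someI_ex[OF ex[of n "ds n"]] unfolding dsS by blast
    then show ?case using someI_ex[OF ex[OF r]] unfolding dsS[of "Suc n"] by blast
  qed
  have agm: "AG n (ds n) (ds m)" if "n \<le> m" for n m
    using that
  proof (induction m rule: dec_induct)
    case base then show ?case by (rule AG_refl)
  next
    case (step m)
    show ?case using AG_trans[OF step(3) conjunct2[OF dsp[of m]] step(1)] .
  qed
  define Gi where "Gi k = pG (ds k) k" for k
  define ci where "ci k = pc (ds (Suc k)) k" for k
  define xi where "xi k = px (ds (Suc k)) k" for k
  define ti where "ti k = pt (ds (Suc k)) k" for k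
  have agG: "Gi k = pG (ds n) k" if "k \<le> n" for k n using agm[OF that] unfolding AG_def Gi_def by simp
  have agc: "ci k = pc (ds n) k \<and> xi k = px (ds n) k \<and> ti k = pt (ds n) k" if "k < n" for k n
    using agm[of "Suc k" n] that unfolding AG_def ci_def xi_def ti_def by simp
  have upto: "sld_derivation_upto P G0 n Gi ci xi ti" for n
  proof -
    have "sld_derivation_upto P G0 n (pG (ds n)) (pc (ds n)) (px (ds n)) (pt (ds n))"
      using dsp[of n] unfolding RT_def realizes_def lpf by blast
    then show ?thesis by (rule sld_upto_cong) (use agG agc in auto)
  qed
  have np: "\<not> pruned_EVR_L G0 Gi ti"
  proof
    assume "pruned_EVR_L G0 Gi ti"
    then obtain i j \<tau> where h: "i < j" "renaming \<tau>"
      "subst_goal (comp_upto ti j) G0 = subst_goal \<tau> (subst_goal (comp_upto ti i) G0)" "Gi j = subst_goal \<tau> (Gi i)"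
      unfolding pruned_EVR_L_def by blast
    have p1: "stt G0 Gi ti j = subst_goal \<tau> (stt G0 Gi ti i)" unfolding stt_def using h(3,4) by simp
    have sk: "stt G0 Gi ti k = stt G0 (pG (ds j)) (pt (ds j)) k" if "k \<le> j" for k
    proof (rule stt_cong)
      show "Gi k = pG (ds j) k" using agG that .
    next
      fix l assume "l < k" then show "ti l = pt (ds j) l" using agc[of l j] that by simp
    qed
    have p2: "stt G0 (pG (ds j)) (pt (ds j)) j = subst_goal \<tau> (stt G0 (pG (ds j)) (pt (ds j)) i)"
      using p1 sk[of j] sk[of i] h(1) by simp
    from path[of j] obtain G2 c2 \<xi>2 \<theta>2 where rE: "realizes P G0 (pf j) G2 c2 \<xi>2 \<theta>2" "unpr G0 G2 \<theta>2 j"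
      unfolding TT_def pf_def by auto
    have rj: "realizes P G0 (pf j) (pG (ds j)) (pc (ds j)) (px (ds j)) (pt (ds j))" using dsp[of j] unfolding RT_def by blast
    have "unpr G0 (pG (ds j)) (pt (ds j)) j"
      by (rule prune_transfer[OF _ rE(2)]) (use claimA[OF rE(1) rj] lpf in auto)
    then show False using p2 h(1,2) unfolding unpr_def by blast
  qed
  show ?thesis using upto np unfolding sld_derivation_inf_def by blast
qed

theorem lemmaL1p2p1:
  fixes P :: "('p, 'f, 'v) clause set" and G0 :: "('p, 'f, 'v) goal"
  assumes "infinite (UNIV :: 'v set)"
    and "finite P"
    and "\<And>G c \<xi> \<theta>. sld_derivation_inf P G0 G c \<xi> \<theta> \<Longrightarrow> pruned_EVR_L G0 G \<theta>"
  shows "\<exists>l::nat. \<forall>n G c \<xi> \<theta>. sld_derivation_upto P G0 n G c \<xi> \<theta> \<longrightarrow>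
           (\<forall>k\<le>n. length (G k) \<le> l)"
proof (rule ccontr)
  assume nb: "\<not> ?thesis"
  have unb: "\<exists>n G c \<xi> \<theta>. sld_derivation_upto P G0 n G c \<xi> \<theta> \<and> (\<exists>k\<le>n. length (G k) > l)" for l
  proof (rule ccontr)
    assume "\<not> (\<exists>n G c \<xi> \<theta>. sld_derivation_upto P G0 n G c \<xi> \<theta> \<and> (\<exists>k\<le>n. length (G k) > l))"
    then have "\<forall>n G c \<xi> \<theta>. sld_derivation_upto P G0 n G c \<xi> \<theta> \<longrightarrow> (\<forall>k\<le>n. length (G k) \<le> l)"
      using not_less by blast
    then show False using nb by blast
  qed
  have "\<exists>f. \<forall>n. map f [0..<n] \<in> TT P G0"
  proof (rule koenig)
    show "s \<in> TT P G0" if "s @ [x] \<in> TT P G0" for s x using TT_pc that .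
    show "finite {x. s @ [x] \<in> TT P G0}" for s using TT_fb[OF assms(2)] .
    show "\<exists>s\<in>TT P G0. length s = n" for n using TT_ub[OF assms(1) assms(2) unb] .
  qed
  then obtain f where f: "\<forall>n. map f [0..<n] \<in> TT P G0" by blast
  obtain G c \<xi> \<theta> where "sld_derivation_inf P G0 G c \<xi> \<theta>" "\<not> pruned_EVR_L G0 G \<theta>"
    using inf_deriv[OF assms(1)] f by blast
  then show False using assms(3) by blast
qed

end
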